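(* Let $A$ be a finite-dimensional symmetric $k$-algebra, $\{S_i:i\in I\}$ representatives of the simple $A$-modules with projective covers $P_i$, and $I_0\subseteq I$. For $t\ge 0$ define complexes $T^{(t)}_i\in K^b(P_A)$ as follows. For $i\in I_0$, $T^{(t)}_i=P_i[t]$ (i.e. $P_i$ concentrated in degree $-t$). For $j\in I\setminus I_0$, $T^{(t)}_j$ is the complex $$0\to R_j^{(t-1)}\to R_j^{(t-2)}\to\cdots\to R_j^{(0)}\to P_j\to 0$$ with $P_j$ in degree $0$ and $R_j^{(m)}$ in degree $-(m+1)$, where, setting $R_j^{(-1)}=P_j$ and $K_j^{(0)}=P_j$, and for $m\ge1$ $K_j^{(m)}=\ker\big(R_j^{(m-1)}\to R_j^{(m-2)}\big)$, the module $R_j^{(m)}$ is the projective cover of the largest submodule $U$ of $K_j^{(m)}$ all of whose simple quotients are isomorphic to some $S_l$ with $l\in I_0$, and the differential $R_j^{(m)}\to R_j^{(m-1)}$ is the composite $R_j^{(m)}\to U\hookrightarrow K_j^{(m)}\hookrightarrow R_j^{(m-1)}$. For $i\in I$ let $T^{(t)}=\bigoplus_{i\in I}T^{(t)}_i$, and let $c^{(t)}_{ij}=\dim_k\operatorname{Hom}_{K^b(P_A)}(T^{(t)}_i,T^{(t)}_j)$ (the Cartan invariants of $B^{(t)}=\operatorname{End}_{K^b(P_A)}(T^{(t)})$, which is derived equivalent to $A$). Then for every $i\in I_0$, $j\in I\setminus I_0$ and $t\ge 0$, $$c^{(t)}_{ij}+c^{(t+1)}_{ij}=\dim_k\operatorn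ame{Hom}_A\big(P_i,R_j^{(t)}\big).$$
   Context: Modules are finitely generated right modules; $P_A$ is the category of finitely generated projective $A$-modules, $K^b(P_A)$ its bounded homotopy category, complexes indexed cohomologically with $(X[1])^n=X^{n+1}$. Each $T^{(t)}$ is a tilting complex for $A$ (obtained by iterating the two-term tilting construction with the same subset $I_0$). *)

theory Defs
  imports Main
begin

text \<open>Matrices over 'k are functions nat => nat => 'k; a matrix of size r x c is
  one vanishing outside {..<r} x {..<c}.  Vectors are row vectors nat => 'k, and
  maps act on the right (v |-> v F), so composition "first F then G" is F G.\<close>

type_synonym 'k mat = "nat \<Rightarrow> nat \<Rightarrow> 'k"

definition zmat :: "'k::zero mat" where "zmat = (\<lambda>_ _. 0)"

definition wf_mat :: "nat \<Rightarrow> nat \<Rightarrow> 'k::zero mat \<Rightarrow> bool" where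
  "wf_mat r c F = (\<forall>i j. (r \<le> i \<or> c \<le> j) \<longrightarrow> F i j = 0)"

definition mmul :: "nat \<Rightarrow> 'k::comm_semiring_1 mat \<Rightarrow> 'k mat \<Rightarrow> 'k mat" where
  "mmul n F G = (\<lambda>i j. \<Sum>l<n. F i l * G l j)"

definition madd :: "'k::plus mat \<Rightarrow> 'k mat \<Rightarrow> 'k mat" where
  "madd F G = (\<lambda>i j. F i j + G i j)"

definition idm :: "nat \<Rightarrow> 'k::zero_neq_one mat" where
  "idm n = (\<lambda>i j. if i = j \<and> i < n then 1 else 0)"

definition vsupp :: "nat \<Rightarrow> (nat \<Rightarrow> 'k::zero) \<Rightarrow> bool" where
  "vsupp n v = (\<forall>i. n \<le> i \<longrightarrow> v i = 0)"

definition vmul :: "nat \<Rightarrow> (nat \<Rightarrow> 'k::comm_semiring_1) \<Rightarrow> 'k mat \<Rightarrow> (nat \<Rightarrow> 'k)" where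
  "vmul n v F = (\<lambda>j. \<Sum>i<n. v i * F i j)"

definition inj_mat :: "nat \<Rightarrow> 'k::comm_semiring_1 mat \<Rightarrow> bool" where
  "inj_mat r F = (\<forall>v. vsupp r v \<longrightarrow> vmul r v F = (\<lambda>_. 0) \<longrightarrow> v = (\<lambda>_. 0))"

definition surj_mat :: "nat \<Rightarrow> nat \<Rightarrow> 'k::comm_semiring_1 mat \<Rightarrow> bool" where
  "surj_mat r c F = (\<forall>w. vsupp c w \<longrightarrow> (\<exists>v. vsupp r v \<and> vmul r v F = w))"

text \<open>A finite-dimensional k-algebra A with basis e_0,...,e_(d-1), given by structure
  constants: e_p e_q = sum_r amul p q r e_r, and 1 = sum_p aone p e_p.\<close>

record 'k alg =
  adim :: nat
  amul :: "nat \<Rightarrow> nat \<Rightarrow> nat \<Rightarrow> 'k"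
  aone :: "nat \<Rightarrow> 'k"

definition fd_algebra :: "'k::field alg \<Rightarrow> bool" where
  "fd_algebra A = (let d = adim A in
     (\<forall>p<d. \<forall>q<d. \<forall>s<d. \<forall>u<d.
        (\<Sum>r<d. amul A p q r * amul A r s u) = (\<Sum>r<d. amul A q s r * amul A p r u)) \<and>
     (\<forall>q<d. \<forall>r<d. (\<Sum>p<d. aone A p * amul A p q r) = (if q = r then 1 else 0)) \<and>
     (\<forall>q<d. \<forall>r<d. (\<Sum>p<d. aone A p * amul A q p r) = (if q = r then 1 else 0)))"

text \<open>Symmetric algebra: there is a linear form lam on A with lam(ab) = lam(ba)
  whose associated bilinear form (a,b) |-> lam(ab) is nondegenerate.\<close>

definition symmetric_algebra :: "'k::field alg \<Rightarrow> bool" where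
  "symmetric_algebra A = (fd_algebra A \<and> (let d = adim A in
     (\<exists>lam :: nat \<Rightarrow> 'k.
        (\<forall>p<d. \<forall>q<d. (\<Sum>r<d. amul A p q r * lam r) = (\<Sum>r<d. amul A q p r * lam r)) \<and>
        (\<forall>c :: nat \<Rightarrow> 'k. (\<forall>q<d. (\<Sum>p<d. c p * (\<Sum>r<d. amul A p q r * lam r)) = 0)
            \<longrightarrow> (\<forall>p<d. c p = 0)))))"

text \<open>A finitely generated (= finite-dimensional) right A-module: a k-space k^n
  (row vectors) with e_p acting by right multiplication by the n x n matrix mact p.\<close>

record 'k amod =
  mdim :: nat
  mact :: "nat \<Rightarrow> 'k mat"

definition is_module :: "'k::field alg \<Rightarrow> 'k amod \<Rightarrow> bool" where
  "is_module A M = (let d = adim A; n = mdim M in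
     (\<forall>p<d. wf_mat n n (mact M p)) \<and>
     (\<forall>p<d. \<forall>q<d. mmul n (mact M p) (mact M q) = (\<lambda>i j. \<Sum>r<d. amul A p q r * mact M r i j)) \<and>
     (\<lambda>i j. \<Sum>p<d. aone A p * mact M p i j) = idm n)"

definition zmod :: "'k::zero amod" where
  "zmod = \<lparr>mdim = 0, mact = (\<lambda>_ _ _. 0)\<rparr>"

definition is_hom :: "'k::field alg \<Rightarrow> 'k amod \<Rightarrow> 'k amod \<Rightarrow> 'k mat \<Rightarrow> bool" where
  "is_hom A M N F = (wf_mat (mdim M) (mdim N) F \<and>
     (\<forall>p<adim A. mmul (mdim M) (mact M p) F = mmul (mdim N) F (mact N p)))"

definition is_mono :: "'k::field alg \<Rightarrow> 'k amod \<Rightarrow> 'k amod \<Rightarrow> 'k mat \<Rightarrow> bool" where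
  "is_mono A M N F = (is_hom A M N F \<and> inj_mat (mdim M) F)"

definition is_epi :: "'k::field alg \<Rightarrow> 'k amod \<Rightarrow> 'k amod \<Rightarrow> 'k mat \<Rightarrow> bool" where
  "is_epi A M N F = (is_hom A M N F \<and> surj_mat (mdim M) (mdim N) F)"

definition isomorphic :: "'k::field alg \<Rightarrow> 'k amod \<Rightarrow> 'k amod \<Rightarrow> bool" where
  "isomorphic A M N = (\<exists>F. is_mono A M N F \<and> is_epi A M N F)"

text \<open>Simple: nonzero and every submodule (image of a monomorphism) is 0 or everything.\<close>

definition simple_mod :: "'k::field alg \<Rightarrow> 'k amod \<Rightarrow> bool" where
  "simple_mod A M = (is_module A M \<and> 0 < mdim M \<and>
     (\<forall>N F. is_module A N \<and> is_mono A N M F \<longrightarrow> mdim N = 0 \<or> mdim N = mdim M))"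

definition simple_reps :: "'k::field alg \<Rightarrow> 'i set \<Rightarrow> ('i \<Rightarrow> 'k amod) \<Rightarrow> bool" where
  "simple_reps A I S = ((\<forall>i\<in>I. simple_mod A (S i)) \<and>
     (\<forall>i\<in>I. \<forall>i'\<in>I. isomorphic A (S i) (S i') \<longrightarrow> i = i') \<and>
     (\<forall>M. simple_mod A M \<longrightarrow> (\<exists>i\<in>I. isomorphic A M (S i))))"

definition projective_mod :: "'k::field alg \<Rightarrow> 'k amod \<Rightarrow> bool" where
  "projective_mod A P = (is_module A P \<and>
     (\<forall>M N g f. is_module A M \<and> is_module A N \<and> is_epi A M N g \<and> is_hom A P N f
        \<longrightarrow> (\<exists>h. is_hom A P M h \<and> mmul (mdim M) h g = f)))"

text \<open>Projective cover: a projective P with an essential epimorphism P -> M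
  (superfluous kernel: any map into P whose composite with the epi is onto is onto).\<close>

definition proj_cover :: "'k::field alg \<Rightarrow> 'k amod \<Rightarrow> 'k amod \<Rightarrow> 'k mat \<Rightarrow> bool" where
  "proj_cover A P M e = (projective_mod A P \<and> is_module A M \<and> is_epi A P M e \<and>
     (\<forall>Q h. is_module A Q \<and> is_hom A Q P h \<and> surj_mat (mdim Q) (mdim M) (mmul (mdim P) h e)
        \<longrightarrow> surj_mat (mdim Q) (mdim P) h))"

definition top_in :: "'k::field alg \<Rightarrow> ('i \<Rightarrow> 'k amod) \<Rightarrow> 'i set \<Rightarrow> 'k amod \<Rightarrow> bool" where
  "top_in A S I0 U = (\<forall>M F. simple_mod A M \<and> is_epi A U M F \<longrightarrow> (\<exists>l\<in>I0. isomorphic A M (S l)))"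

definition largest_sub :: "'k::field alg \<Rightarrow> ('i \<Rightarrow> 'k amod) \<Rightarrow> 'i set \<Rightarrow> 'k amod \<Rightarrow> 'k amod \<Rightarrow> 'k mat \<Rightarrow> bool" where
  "largest_sub A S I0 K U \<iota> = (is_module A U \<and> is_mono A U K \<iota> \<and> top_in A S I0 U \<and>
     (\<forall>V \<kappa>. is_module A V \<and> is_mono A V K \<kappa> \<and> top_in A S I0 V
        \<longrightarrow> (\<exists>g. is_hom A V U g \<and> mmul (mdim U) g \<iota> = \<kappa>)))"

definition is_kernel :: "'k::field alg \<Rightarrow> 'k amod \<Rightarrow> 'k amod \<Rightarrow> 'k mat \<Rightarrow> 'k amod \<Rightarrow> 'k mat \<Rightarrow> bool" where
  "is_kernel A M N f K \<kappa> = (is_module A K \<and> is_mono A K M \<kappa> \<and> mmul (mdim M) \<kappa> f = zmat \<and>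
     (\<forall>v. vsupp (mdim M) v \<and> vmul (mdim M) v f = (\<lambda>_. 0)
        \<longrightarrow> (\<exists>u. vsupp (mdim K) u \<and> vmul (mdim K) u \<kappa> = v)))"

text \<open>Index shift: R m is R_j^(m) for m >= 0 (R_j^(-1) = P_j is handled separately),
  dR m : R_j^(m) -> R_j^(m-1) is the differential, K m = K_j^(m) with inclusion
  kappa m : K_j^(m) -> R_j^(m-1), U m the largest submodule of K_j^(m) with top in
  add(S_l, l in I0) with inclusion iota m, and pi m : R_j^(m) -> U m a projective cover.\<close>

definition R_tower ::
  "'k::field alg \<Rightarrow> ('i \<Rightarrow> 'k amod) \<Rightarrow> 'i set \<Rightarrow> 'k amod \<Rightarrow>
   (nat \<Rightarrow> 'k amod) \<Rightarrow> (nat \<Rightarrow> 'k mat) \<Rightarrow> (nat \<Rightarrow> 'k amod) \<Rightarrow> (nat \<Rightarrow> 'k mat) \<Rightarrow>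
   (nat \<Rightarrow> 'k amod) \<Rightarrow> (nat \<Rightarrow> 'k mat) \<Rightarrow> (nat \<Rightarrow> 'k mat) \<Rightarrow> bool" where
  "R_tower A S I0 Pj R dR K \<kappa> U \<iota> \<pi> =
     (let prev = (\<lambda>m. if m = 0 then Pj else R (m - 1)) in
      \<forall>m. (if m = 0 then K 0 = Pj \<and> \<kappa> 0 = idm (mdim Pj)
           else is_kernel A (R (m - 1)) (prev (m - 1)) (dR (m - 1)) (K m) (\<kappa> m)) \<and>
          largest_sub A S I0 (K m) (U m) (\<iota> m) \<and>
          proj_cover A (R m) (U m) (\<pi> m) \<and>
          dR m = mmul (mdim (U m)) (\<pi> m) (mmul (mdim (K m)) (\<iota> m) (\<kappa> m)))"

text \<open>A complex is a pair (C, dC) with C n the module in (cohomological) degree n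
  and dC n : C n -> C (n+1).\<close>

definition chain_map :: "'k::field alg \<Rightarrow> (int \<Rightarrow> 'k amod) \<Rightarrow> (int \<Rightarrow> 'k mat) \<Rightarrow>
    (int \<Rightarrow> 'k amod) \<Rightarrow> (int \<Rightarrow> 'k mat) \<Rightarrow> (int \<Rightarrow> 'k mat) \<Rightarrow> bool" where
  "chain_map A C dC E dE f = ((\<forall>n. is_hom A (C n) (E n) (f n)) \<and>
     (\<forall>n. mmul (mdim (C (n + 1))) (dC n) (f (n + 1)) = mmul (mdim (E n)) (f n) (dE n)))"

definition null_homotopic :: "'k::field alg \<Rightarrow> (int \<Rightarrow> 'k amod) \<Rightarrow> (int \<Rightarrow> 'k mat) \<Rightarrow>
    (int \<Rightarrow> 'k amod) \<Rightarrow> (int \<Rightarrow> 'k mat) \<Rightarrow> (int \<Rightarrow> 'k mat) \<Rightarrow> bool" where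
  "null_homotopic A C dC E dE f = (\<exists>h. (\<forall>n. is_hom A (C n) (E (n - 1)) (h n)) \<and>
     (\<forall>n. f n = madd (mmul (mdim (C (n + 1))) (dC n) (h (n + 1)))
                      (mmul (mdim (E (n - 1))) (h n) (dE (n - 1)))))"

text \<open>dim_k Hom_{K^b(P_A)}(C, E): the maximal number of chain maps that are linearly
  independent modulo null-homotopic maps.\<close>

definition dim_HomK :: "'k::field alg \<Rightarrow> (int \<Rightarrow> 'k amod) \<Rightarrow> (int \<Rightarrow> 'k mat) \<Rightarrow>
    (int \<Rightarrow> 'k amod) \<Rightarrow> (int \<Rightarrow> 'k mat) \<Rightarrow> nat" where
  "dim_HomK A C dC E dE = Max {length fs | fs.
     (\<forall>f\<in>set fs. chain_map A C dC E dE f) \<and>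
     (\<forall>c :: nat \<Rightarrow> 'k. null_homotopic A C dC E dE (\<lambda>n i j. \<Sum>l<length fs. c l * (fs ! l) n i j)
        \<longrightarrow> (\<forall>l<length fs. c l = 0))}"

definition dim_Hom :: "'k::field alg \<Rightarrow> 'k amod \<Rightarrow> 'k amod \<Rightarrow> nat" where
  "dim_Hom A M N = Max {length Fs | Fs.
     (\<forall>F\<in>set Fs. is_hom A M N F) \<and>
     (\<forall>c :: nat \<Rightarrow> 'k. (\<lambda>i j. \<Sum>l<length Fs. c l * (Fs ! l) i j) = zmat
        \<longrightarrow> (\<forall>l<length Fs. c l = 0))}"

definition T_mods_I0 :: "('i \<Rightarrow> 'k::zero amod) \<Rightarrow> 'i \<Rightarrow> nat \<Rightarrow> int \<Rightarrow> 'k amod" where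
  "T_mods_I0 P i t = (\<lambda>n. if n = - int t then P i else zmod)"

definition T_diff_I0 :: "nat \<Rightarrow> int \<Rightarrow> 'k::zero mat" where
  "T_diff_I0 t = (\<lambda>n. zmat)"

definition T_mods_j :: "'k::zero amod \<Rightarrow> (nat \<Rightarrow> 'k amod) \<Rightarrow> nat \<Rightarrow> int \<Rightarrow> 'k amod" where
  "T_mods_j Pj R t = (\<lambda>n. if n = 0 then Pj
                         else if - int t \<le> n \<and> n < 0 then R (nat (- n - 1)) else zmod)"

definition T_diff_j :: "(nat \<Rightarrow> 'k::zero mat) \<Rightarrow> nat \<Rightarrow> int \<Rightarrow> 'k mat" where
  "T_diff_j dR t = (\<lambda>n. if - int t \<le> n \<and> n < 0 then dR (nat (- n - 1)) else zmat)"

end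

theory Submission
  imports Defs "HOL-Library.Function_Algebras" "HOL.Vector_Spaces"
begin
lemma sum_fun_apply: "(sum f A) x = sum (\<lambda>a. f a x) A"
  by (induct A rule: infinite_finite_induct) auto

lemma sum_nth_set:
  assumes "distinct xs"
  shows "(\<Sum>l<length xs. f (xs!l)) = (\<Sum>x\<in>set xs. f x)"
proof -
  have "set xs = (!) xs ` {..<length xs}" by (auto simp: set_conv_nth)
  moreover have "inj_on ((!) xs) {..<length xs}" using assms by (simp add: inj_on_nth)
  ultimately show ?thesis using sum.reindex[of "(!) xs" "{..<length xs}" f] by (simp add: comp_def)
qed

context vector_space begin

lemma indepL_imp:
  assumes "\<forall>c. (\<Sum>l<length xs. c l *s xs!l) = 0 \<longrightarrow> (\<forall>l<length xs. c l = 0)"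
  shows "distinct xs \<and> independent (set xs)"
proof
  show d: "distinct xs"
  proof (rule ccontr)
    assume "\<not> distinct xs"
    then obtain a b where ab: "a < length xs" "b < length xs" "a \<noteq> b" "xs!a = xs!b"
      by (auto simp: distinct_conv_nth)
    define c where "c = (\<lambda>l. if l = a then (1::'a) else if l = b then -1 else 0)"
    have "(\<Sum>l<length xs. c l *s xs!l) = (\<Sum>l\<in>{a,b}. c l *s xs!l)"
      by (rule sum.mono_neutral_right) (use ab in \<open>auto simp: c_def\<close>)
    also have "\<dots> = 0" using ab by (simp add: c_def)
    finally have "c a = 0" using assms ab by blast
    then show False by (simp add: c_def)
  qed
  show "independent (set xs)"
  proof (rule independent_if_scalars_zero)
    fix f x assume h: "(\<Sum>x\<in>set xs. f x *s x) = 0" "x \<in> set xs"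
    have "(\<Sum>l<length xs. f (xs!l) *s xs!l) = 0"
      using h(1) sum_nth_set[OF d, of "\<lambda>x. f x *s x"] by simp
    then have "\<forall>l<length xs. f (xs!l) = 0" using spec[OF assms, of "\<lambda>l. f (xs!l)"] by simp
    then show "f x = 0" using h(2) by (auto simp: in_set_conv_nth)
  qed simp
qed

lemma indepL_from:
  assumes d: "distinct xs" and i: "independent (set xs)"
  shows "\<forall>c. (\<Sum>l<length xs. c l *s xs!l) = 0 \<longrightarrow> (\<forall>l<length xs. c l = 0)"
proof (intro allI impI)
  fix c l assume h: "(\<Sum>l<length xs. c l *s xs!l) = 0" and l: "l < length xs"
  define f where "f = (\<lambda>x. c (inv_into {..<length xs} ((!) xs) x))"
  have inj: "inj_on ((!) xs) {..<length xs}" using d by (simp add: inj_on_nth)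
  have fx: "f (xs!k) = c k" if "k < length xs" for k
    using inv_into_f_f[OF inj] that by (simp add: f_def)
  have "(\<Sum>x\<in>set xs. f x *s x) = (\<Sum>k<length xs. f (xs!k) *s xs!k)"
    using sum_nth_set[OF d, of "\<lambda>x. f x *s x"] by simp
  also have "\<dots> = (\<Sum>k<length xs. c k *s xs!k)" by (rule sum.cong) (auto simp: fx)
  finally have "(\<Sum>x\<in>set xs. f x *s x) = 0" using h by simp
  then have "f (xs!l) = 0" using independentD[OF i finite_set[of xs] order_refl] l by simp
  then show "c l = 0" using fx l by simp
qed

lemma span_list:
  assumes "distinct xs"
  shows "span (set xs) = {(\<Sum>l<length xs. c l *s xs!l) | c. True}"
proof -
  have "span (set xs) = range (\<lambda>u. \<Sum>v\<in>set xs. u v *s v)" by (simp add: span_finite)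
  also have "\<dots> = {(\<Sum>l<length xs. c l *s xs!l) | c. True}"
  proof -
    have A: "\<exists>c. (\<Sum>v\<in>set xs. u v *s v) = (\<Sum>l<length xs. c l *s xs!l)" for u
      by (rule exI[of _ "\<lambda>l. u (xs!l)"]) (simp add: sum_nth_set[OF assms, of "\<lambda>v. u v *s v"])
    have B: "(\<Sum>l<length xs. c l *s xs!l) \<in> range (\<lambda>u. \<Sum>v\<in>set xs. u v *s v)" for c
    proof -
      have inj: "inj_on ((!) xs) {..<length xs}" using assms by (simp add: inj_on_nth)
      define u where "u = (\<lambda>x. c (inv_into {..<length xs} ((!) xs) x))"
      have ux: "u (xs!k) = c k" if "k < length xs" for k
        using inv_into_f_f[OF inj] that by (simp add: u_def)
      have "(\<Sum>l<length xs. c l *s xs!l) = (\<Sum>l<length xs. u (xs!l) *s xs!l)"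
        by (rule sum.cong) (auto simp: ux)
      also have "\<dots> = (\<Sum>v\<in>set xs. u v *s v)" by (simp add: sum_nth_set[OF assms, of "\<lambda>v. u v *s v"])
      finally show ?thesis by blast
    qed
    show ?thesis using A B by blast
  qed
  finally show ?thesis .
qed

lemma dimL_eq:
  assumes sub: "subspace X" and fin: "finite T" and XT: "X \<subseteq> span T"
  shows "Max {length xs | xs. set xs \<subseteq> X \<and>
     (\<forall>c. (\<Sum>l<length xs. c l *s xs!l) = 0 \<longrightarrow> (\<forall>l<length xs. c l = 0))} = dim X"
proof -
  let ?L = "{length xs | xs. set xs \<subseteq> X \<and>
     (\<forall>c. (\<Sum>l<length xs. c l *s xs!l) = 0 \<longrightarrow> (\<forall>l<length xs. c l = 0))}"
  obtain B where B: "B \<subseteq> X" "independent B" "X \<subseteq> span B" "card B = dim X"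
    using basis_exists by blast
  have finB: "finite B" using independent_span_bound[OF fin B(2)] B(1) XT by blast
  obtain bs where bs: "set bs = B" "distinct bs" using finite_distinct_list[OF finB] by blast
  have "dim X \<in> ?L"
    using bs B indepL_from[of bs] by (auto simp: distinct_card[symmetric] intro!: exI[of _ bs])
  moreover have "n \<le> dim X" if "n \<in> ?L" for n
  proof -
    from that obtain xs where xs: "n = length xs" "set xs \<subseteq> X"
      "\<forall>c. (\<Sum>l<length xs. c l *s xs!l) = 0 \<longrightarrow> (\<forall>l<length xs. c l = 0)" by blast
    from indepL_imp[OF xs(3)] have "distinct xs" "independent (set xs)" by auto
    moreover have "set xs \<subseteq> span B" using xs(2) B(3) by blast
    ultimately have "card (set xs) \<le> card B" using independent_span_bound[OF finB] by blast
    then show ?thesis using xs(1) \<open>distinct xs\<close> B(4) by (simp add: distinct_card)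
  qed
  moreover have "finite ?L" by (rule finite_subset[of _ "{..dim X}"]) (use calculation in auto)
  ultimately show ?thesis by (intro Max_eqI) auto
qed

lemma full_span:
  assumes fin: "finite T" and i: "independent B" and BT: "B \<subseteq> span T" and c: "card T \<le> card B"
  shows "T \<subseteq> span B"
proof
  fix x assume x: "x \<in> T"
  show "x \<in> span B"
  proof (rule ccontr)
    assume nx: "x \<notin> span B"
    have ii: "independent (insert x B)" by (rule independent_insertI[OF nx i])
    have "insert x B \<subseteq> span T" using BT x span_base by blast
    from independent_span_bound[OF fin ii this] have "finite (insert x B)" "card (insert x B) \<le> card T" by auto
    moreover have "x \<notin> B" using nx span_base by blast
    ultimately show False using c by simp
  qed
qed

end

context vector_space begin

lemma rank_nullity:
  assumes sub: "subspace X" and fin: "finite T" and XT: "X \<subseteq> span T"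
    and fin2: "finite T2" and YT: "\<Phi> ` X \<subseteq> span T2"
    and add: "\<And>x y. x \<in> X \<Longrightarrow> y \<in> X \<Longrightarrow> \<Phi> (x + y) = \<Phi> x + \<Phi> y"
    and sc: "\<And>c x. x \<in> X \<Longrightarrow> \<Phi> (c *s x) = c *s \<Phi> x"
  shows "dim X = dim {x\<in>X. \<Phi> x = 0} + dim (\<Phi> ` X)"
proof -
  define Z where "Z = {x\<in>X. \<Phi> x = 0}"
  define Y where "Y = \<Phi> ` X"
  obtain BZ where BZ: "BZ \<subseteq> Z" "independent BZ" "Z \<subseteq> span BZ" "card BZ = dim Z"
    using basis_exists by blast
  obtain BY where BY: "BY \<subseteq> Y" "independent BY" "Y \<subseteq> span BY" "card BY = dim Y"
    using basis_exists by blast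
  have finBZ: "finite BZ" using independent_span_bound[OF fin BZ(2)] BZ(1) XT Z_def by blast
  have finBY: "finite BY" using independent_span_bound[OF fin2 BY(2)] BY(1) YT Y_def by blast
  define L where "L = (\<lambda>y. SOME x. x \<in> X \<and> \<Phi> x = y)"
  have L: "L y \<in> X \<and> \<Phi> (L y) = y" if "y \<in> BY" for y
  proof -
    have "\<exists>x. x \<in> X \<and> \<Phi> x = y" using that BY(1) Y_def by blast
    then show ?thesis unfolding L_def by (rule someI_ex)
  qed
  have injL: "inj_on L BY" by (rule inj_on_inverseI[of _ \<Phi>]) (use L in auto)
  have n0: "0 \<notin> BY" using BY(2) dependent_zero by blast
  have disj: "BZ \<inter> L ` BY = {}"
  proof -
    { fix y assume y: "y \<in> BY" "L y \<in> BZ"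
      then have "\<Phi> (L y) = 0" using BZ(1) Z_def by auto
      then have False using L[OF y(1)] n0 y(1) by auto }
    then show ?thesis by blast
  qed
  have phi_sum: "\<Phi> (\<Sum>v\<in>F. f v *s g v) = (\<Sum>v\<in>F. f v *s \<Phi> (g v))"
    if "finite F" "\<And>v. v \<in> F \<Longrightarrow> g v \<in> X" for F f g
    using that
  proof (induct F rule: finite_induct)
    case empty
    have "\<Phi> 0 = \<Phi> (0 *s 0)" by simp
    also have "\<dots> = 0 *s \<Phi> 0" using sc[OF subspace_0[OF sub]] by blast
    also have "\<dots> = 0" by simp
    finally show ?case by simp
  next
    case (insert a F)
    have s: "(\<Sum>v\<in>F. f v *s g v) \<in> X"
      using insert by (auto intro!: subspace_sum[OF sub] subspace_scale[OF sub])
    have "\<Phi> (\<Sum>v\<in>insert a F. f v *s g v) = \<Phi> (f a *s g a + (\<Sum>v\<in>F. f v *s g v))"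
      using insert by simp
    also have "\<dots> = f a *s \<Phi> (g a) + \<Phi> (\<Sum>v\<in>F. f v *s g v)"
      using add[OF subspace_scale[OF sub] s] sc insert by auto
    finally show ?case using insert by simp
  qed
  define C where "C = BZ \<union> L ` BY"
  have finC: "finite C" using finBZ finBY C_def by simp
  have CX: "C \<subseteq> X" using BZ(1) Z_def L C_def by auto
  have indC: "independent C"
  proof (rule independent_if_scalars_zero[OF finC])
    fix f x assume h: "(\<Sum>x\<in>C. f x *s x) = 0" "x \<in> C"
    have split: "(\<Sum>x\<in>C. f x *s x) = (\<Sum>x\<in>BZ. f x *s x) + (\<Sum>y\<in>BY. f (L y) *s L y)"
      unfolding C_def using finBZ finBY disj
      by (simp add: sum.union_disjoint sum.reindex[OF injL])
    have "\<Phi> (\<Sum>x\<in>C. f x *s x) = \<Phi> 0" using h by simp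
    also have "\<Phi> 0 = 0" using phi_sum[of "{}"] by simp
    finally have "\<Phi> ((\<Sum>x\<in>BZ. f x *s x) + (\<Sum>y\<in>BY. f (L y) *s L y)) = 0" using split by simp
    moreover have "(\<Sum>x\<in>BZ. f x *s x) \<in> X" "(\<Sum>y\<in>BY. f (L y) *s L y) \<in> X"
      using BZ(1) Z_def L by (auto intro!: subspace_sum[OF sub] subspace_scale[OF sub])
    ultimately have "\<Phi> (\<Sum>x\<in>BZ. f x *s x) + \<Phi> (\<Sum>y\<in>BY. f (L y) *s L y) = 0" using add by simp
    moreover have "\<Phi> (\<Sum>x\<in>BZ. f x *s x) = 0"
    proof -
      have "\<Phi> (\<Sum>x\<in>BZ. f x *s id x) = (\<Sum>v\<in>BZ. f v *s \<Phi> (id v))"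
        using phi_sum[OF finBZ, of id f] BZ(1) Z_def by auto
      also have "\<dots> = 0" using BZ(1) Z_def by (auto intro!: sum.neutral)
      finally show ?thesis by simp
    qed
    moreover have "\<Phi> (\<Sum>y\<in>BY. f (L y) *s L y) = (\<Sum>y\<in>BY. f (L y) *s y)"
      using phi_sum[OF finBY, of L "\<lambda>y. f (L y)"] L by auto
    ultimately have "(\<Sum>y\<in>BY. f (L y) *s y) = 0" by simp
    then have fY: "\<forall>y\<in>BY. f (L y) = 0"
      using independentD[OF BY(2) finBY order_refl, of "\<lambda>y. f (L y)"] by blast
    then have "(\<Sum>y\<in>BY. f (L y) *s L y) = 0" by simp
    then have "(\<Sum>x\<in>BZ. f x *s x) = 0" using h split by simp
    then have "\<forall>z\<in>BZ. f z = 0" using independentD[OF BZ(2) finBZ order_refl, of f] by blast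
    then show "f x = 0" using fY h(2) C_def by auto
  qed
  have XC: "X \<subseteq> span C"
  proof
    fix x assume x: "x \<in> X"
    have "\<Phi> x \<in> span BY" using x BY(3) Y_def by blast
    then obtain u where u: "\<Phi> x = (\<Sum>y\<in>BY. u y *s y)" using span_finite[OF finBY] by auto
    define x' where "x' = (\<Sum>y\<in>BY. u y *s L y)"
    have x'X: "x' \<in> X" unfolding x'_def using L by (auto intro!: subspace_sum[OF sub] subspace_scale[OF sub])
    have px': "\<Phi> x' = \<Phi> x" unfolding x'_def u using phi_sum[OF finBY, of L u] L by auto
    have mx': "(-1) *s x' \<in> X" using x'X subspace_scale[OF sub] by blast
    have "\<Phi> (x + (-1) *s x') = \<Phi> x + (-1) *s \<Phi> x'" using add[OF x mx'] sc[OF x'X, of "-1"] by (simp only:)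
    also have "\<dots> = 0" using px' by simp
    finally have "x + (-1) *s x' \<in> Z" using Z_def x mx' subspace_add[OF sub] by blast
    then have a: "x + (-1) *s x' \<in> span C" using BZ(3) span_mono[of BZ C] C_def by blast
    have b: "x' \<in> span C" unfolding x'_def
      by (rule span_sum, rule span_scale, rule span_base) (auto simp: C_def)
    have "x = (x + (-1) *s x') + x'" by simp
    then show "x \<in> span C" using span_add[OF a b] by metis
  qed
  have cardC: "card C = card BZ + card BY"
    unfolding C_def using finBZ finBY disj by (simp add: card_Un_disjoint card_image[OF injL])
  have "dim X = card C" using dim_unique[OF CX XC indC refl] by simp
  then show ?thesis using cardC BZ(4) BY(4) Z_def Y_def by simp
qed

end

definition vscale :: "'k::field \<Rightarrow> ('a \<Rightarrow> 'k) \<Rightarrow> ('a \<Rightarrow> 'k)" where "vscale c v = (\<lambda>i. c * v i)"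
definition mscale :: "'k::field \<Rightarrow> ('a \<Rightarrow> 'b \<Rightarrow> 'k) \<Rightarrow> ('a \<Rightarrow> 'b \<Rightarrow> 'k)" where "mscale c F = (\<lambda>i j. c * F i j)"

interpretation vv: vector_space vscale
  by unfold_locales (simp_all add: vscale_def fun_eq_iff algebra_simps)

interpretation mm: vector_space mscale
  by unfold_locales (simp_all add: mscale_def fun_eq_iff algebra_simps)

definition unitv :: "nat \<Rightarrow> nat \<Rightarrow> 'k::zero_neq_one" where
  "unitv a = (\<lambda>i. if i = a then 1 else 0)"

lemma vmul_mmul: "vmul m (vmul r v F) G = vmul r v (mmul m F (G::'k::comm_semiring_1 mat))"
  unfolding vmul_def mmul_def
  by (rule ext) (simp add: sum_distrib_left sum_distrib_right mult.assoc, rule sum.swap)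

lemma mmul_assoc: "mmul n (mmul m F G) H = mmul m F (mmul n G (H::'k::comm_semiring_1 mat))"
  unfolding mmul_def
  by (rule ext, rule ext) (simp add: sum_distrib_left sum_distrib_right mult.assoc, rule sum.swap)

lemma mmul_row: "mmul m F G a = vmul m (F a) G"
  by (simp add: mmul_def vmul_def)

lemma wf_mmul: "wf_mat r c' F \<Longrightarrow> wf_mat r' c G \<Longrightarrow> wf_mat r c (mmul m F G)"
  by (auto simp: wf_mat_def mmul_def)

lemma vsupp_vmul: "wf_mat r c F \<Longrightarrow> vsupp c (vmul r v F)"
  by (auto simp: wf_mat_def vsupp_def vmul_def)

lemma if_mult_one: "(if P then (1::'a::semiring_1) else 0) * x = (if P then x else 0)"
  by simp

lemma mult_if_one: "x * (if P then (1::'a::semiring_1) else 0) = (if P then x else 0)"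
  by simp

lemma vmul_unit: "a < r \<Longrightarrow> vmul r (unitv a) F = F a"
  unfolding vmul_def unitv_def
  by (rule ext) (simp add: if_mult_one)

lemma vsupp_unit: "a < r \<Longrightarrow> vsupp r (unitv a)"
  by (simp add: vsupp_def unitv_def)

lemma vmul_diff: "vmul r (\<lambda>i. x i - y i) (F::'k::comm_ring_1 mat) = (\<lambda>j. vmul r x F j - vmul r y F j)"
  by (simp add: vmul_def left_diff_distrib sum_subtractf)

lemma vmul_add: "vmul r (\<lambda>i. x i + y i) F = (\<lambda>j. vmul r x F j + vmul r y F j)"
  by (simp add: vmul_def algebra_simps sum.distrib)

lemma vmul_scale: "vmul r (\<lambda>i. c * x i) F = (\<lambda>j. c * vmul r x F j)"
  by (simp add: vmul_def algebra_simps sum_distrib_left)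

lemma vmul_sum: "vmul r (\<lambda>i. \<Sum>a\<in>S. w a * x a i) F = (\<lambda>j. \<Sum>a\<in>S. w a * vmul r (x a) (F::'k::comm_semiring_1 mat) j)"
  unfolding vmul_def
  by (rule ext) (simp add: sum_distrib_left sum_distrib_right mult.assoc, rule sum.swap)

lemma vmul_zero[simp]: "vmul r (\<lambda>_. 0) F = (\<lambda>_. 0)"
  by (simp add: vmul_def)

lemma vmul_zmat[simp]: "vmul r v zmat = (\<lambda>_. 0)"
  by (simp add: vmul_def zmat_def)

lemma mmul_zmat_left[simp]: "mmul m zmat F = zmat"
  by (simp add: mmul_def zmat_def)

lemma mmul_zmat_right[simp]: "mmul m F zmat = zmat"
  by (simp add: mmul_def zmat_def)

lemma mmul_0[simp]: "mmul 0 F G = zmat"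
  by (simp add: mmul_def zmat_def)

lemma vmul_0[simp]: "vmul 0 v F = (\<lambda>_. 0)"
  by (simp add: vmul_def)

lemma wf_mat_0: "wf_mat 0 c F \<Longrightarrow> F = zmat"
  by (auto simp: wf_mat_def zmat_def)

lemma wf_zmat[simp]: "wf_mat r c zmat"
  by (simp add: wf_mat_def zmat_def)

lemma vsupp_0: "vsupp 0 v \<Longrightarrow> v = (\<lambda>_. 0)"
  by (auto simp: vsupp_def)

lemma mmul_idm_right: "wf_mat r n F \<Longrightarrow> mmul n F (idm n) = (F::'k::comm_semiring_1 mat)"
  unfolding mmul_def idm_def wf_mat_def
  by (rule ext, rule ext) (auto simp: mult_if_one)

lemma mmul_idm_left: "wf_mat r n F \<Longrightarrow> mmul r (idm r) F = (F::'k::comm_semiring_1 mat)"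
  unfolding mmul_def idm_def wf_mat_def
  apply (rule ext, rule ext)
  subgoal for i j by (cases "i < r") (auto simp: if_mult_one)
  done

lemma wf_idm: "wf_mat n n (idm n)"
  by (simp add: wf_mat_def idm_def)

lemma inj_vec:
  fixes F :: "'k::field mat"
  assumes "inj_mat r F" "vsupp r x" "vsupp r y" "vmul r x F = vmul r y F"
  shows "x = y"
proof -
  have "vsupp r (\<lambda>i. x i - y i)" using assms by (simp add: vsupp_def)
  moreover have "vmul r (\<lambda>i. x i - y i) F = (\<lambda>_. 0)" using assms(4) by (simp add: vmul_diff)
  ultimately have "(\<lambda>i. x i - y i) = (\<lambda>_. 0)" using assms(1) by (simp add: inj_mat_def)
  then show ?thesis by (simp add: fun_eq_iff)
qed

lemma cancel_right:
  fixes K :: "'k::field mat"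
  assumes "inj_mat m K" "wf_mat r m X" "wf_mat r m Y" "mmul m X K = mmul m Y K"
  shows "X = Y"
proof (rule ext)
  fix a show "X a = Y a"
  proof (cases "a < r")
    case True
    have "vsupp m (X a)" "vsupp m (Y a)" using assms(2,3) by (auto simp: wf_mat_def vsupp_def)
    moreover have "vmul m (X a) K = vmul m (Y a) K" using assms(4) mmul_row by metis
    ultimately show ?thesis using inj_vec[OF assms(1)] by blast
  next
    case False then show ?thesis using assms(2,3) by (auto simp: wf_mat_def)
  qed
qed

lemma cancel_left_epi:
  assumes "surj_mat r s e" "wf_mat s c X" "wf_mat s c Y" "mmul s e X = mmul s e Y"
  shows "X = Y"
proof (rule ext)
  fix a show "X a = Y a"
  proof (cases "a < s")
    case True
    obtain x where x: "vsupp r x" "vmul r x e = unitv a"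
      using assms(1) vsupp_unit[OF True] unfolding surj_mat_def by blast
    have "X a = vmul s (vmul r x e) X" using x vmul_unit[OF True, of X] by simp
    also have "\<dots> = vmul r x (mmul s e X)" by (rule vmul_mmul)
    also have "\<dots> = vmul s (vmul r x e) Y" using assms(4) vmul_mmul by metis
    also have "\<dots> = Y a" using x vmul_unit[OF True, of Y] by simp
    finally show ?thesis .
  next
    case False then show ?thesis using assms(2,3) by (auto simp: wf_mat_def)
  qed
qed

lemma mmul_lin_right: "mmul m F (\<lambda>i j. \<Sum>s\<in>S. c s * G s i j) = (\<lambda>i j. \<Sum>s\<in>S. c s * mmul m (F::'k::comm_semiring_1 mat) (G s) i j)"
  unfolding mmul_def
  by (rule ext, rule ext) (simp add: sum_distrib_left mult.left_commute, rule sum.swap)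

lemma mmul_lin_left: "mmul m (\<lambda>i j. \<Sum>s\<in>S. c s * G s i j) F = (\<lambda>i j. \<Sum>s\<in>S. c s * mmul m (G s) (F::'k::comm_semiring_1 mat) i j)"
  unfolding mmul_def
  by (rule ext, rule ext) (simp add: sum_distrib_left sum_distrib_right mult.assoc, rule sum.swap)

lemma mmul_add_left: "mmul m (\<lambda>i j. F i j + G i j) H = (\<lambda>i j. mmul m F H i j + mmul m G H i j)"
  by (simp add: mmul_def algebra_simps sum.distrib)

lemma mmul_add_right: "mmul m H (\<lambda>i j. F i j + G i j) = (\<lambda>i j. mmul m H F i j + mmul m H G i j)"
  by (simp add: mmul_def algebra_simps sum.distrib)

lemma mmul_scale_left: "mmul m (\<lambda>i j. c * F i j) H = (\<lambda>i j. c * mmul m F H i j)"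
  by (simp add: mmul_def algebra_simps sum_distrib_left)

lemma mmul_scale_right: "mmul m H (\<lambda>i j. c * F i j) = (\<lambda>i j. c * mmul m H F i j)"
  by (simp add: mmul_def algebra_simps sum_distrib_left)

lemma hom_comp:
  assumes "is_hom A M N F" "is_hom A N L G"
  shows "is_hom A M L (mmul (mdim N) F G)"
  unfolding is_hom_def
proof
  show "wf_mat (mdim M) (mdim L) (mmul (mdim N) F G)"
    using assms by (auto simp: is_hom_def intro: wf_mmul)
  show "\<forall>p<adim A. mmul (mdim M) (mact M p) (mmul (mdim N) F G) = mmul (mdim L) (mmul (mdim N) F G) (mact L p)"
  proof (intro allI impI)
    fix p assume p: "p < adim A"
    have "mmul (mdim M) (mact M p) (mmul (mdim N) F G) = mmul (mdim N) (mmul (mdim M) (mact M p) F) G"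
      by (simp add: mmul_assoc)
    also have "\<dots> = mmul (mdim N) (mmul (mdim N) F (mact N p)) G" using assms(1) p by (simp add: is_hom_def)
    also have "\<dots> = mmul (mdim N) F (mmul (mdim N) (mact N p) G)" by (simp add: mmul_assoc)
    also have "\<dots> = mmul (mdim N) F (mmul (mdim L) G (mact L p))" using assms(2) p by (simp add: is_hom_def)
    also have "\<dots> = mmul (mdim L) (mmul (mdim N) F G) (mact L p)" by (simp add: mmul_assoc)
    finally show "mmul (mdim M) (mact M p) (mmul (mdim N) F G) = mmul (mdim L) (mmul (mdim N) F G) (mact L p)" .
  qed
qed

lemma hom_zero: "is_hom A M N zmat"
  by (simp add: is_hom_def)

lemma hom_idm: "is_module A M \<Longrightarrow> is_hom A M M (idm (mdim M))"
  unfolding is_hom_def is_module_def Let_def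
  by (auto simp: wf_idm mmul_idm_right mmul_idm_left)

lemma hom_add: "is_hom A M N F \<Longrightarrow> is_hom A M N G \<Longrightarrow> is_hom A M N (\<lambda>i j. F i j + G i j)"
  unfolding is_hom_def by (auto simp: wf_mat_def mmul_add_left mmul_add_right)

lemma hom_scale: "is_hom A M N F \<Longrightarrow> is_hom A M N (\<lambda>i j. c * F i j)"
  unfolding is_hom_def by (auto simp: wf_mat_def mmul_scale_left mmul_scale_right)

lemma hom_subspace: "mm.subspace {F. is_hom A M N F}"
  unfolding mm.subspace_def
  by (auto simp: mscale_def hom_add hom_scale hom_zero[unfolded zmat_def] zero_fun_def plus_fun_def)

definition Emat :: "nat \<times> nat \<Rightarrow> nat \<Rightarrow> nat \<Rightarrow> 'k::zero_neq_one" where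
  "Emat = (\<lambda>(a,b) i j. if i = a \<and> j = b then 1 else 0)"

lemma wf_in_span:
  assumes "wf_mat r c F"
  shows "F \<in> mm.span (Emat ` ({..<r} \<times> {..<c}))"
proof -
  have eq: "F = (\<Sum>ab\<in>{..<r} \<times> {..<c}. mscale (F (fst ab) (snd ab)) (Emat ab))"
  proof (rule ext, rule ext)
    fix i j
    have "(\<Sum>ab\<in>{..<r} \<times> {..<c}. mscale (F (fst ab) (snd ab)) (Emat ab)) i j
        = (\<Sum>ab\<in>{..<r} \<times> {..<c}. F (fst ab) (snd ab) * Emat ab i j)"
      by (simp add: sum_fun_apply mscale_def)
    also have "\<dots> = F i j"
    proof (cases "i < r \<and> j < c")
      case True
      have "(\<Sum>ab\<in>{..<r} \<times> {..<c}. F (fst ab) (snd ab) * Emat ab i j) = (\<Sum>ab\<in>{(i,j)}. F (fst ab) (snd ab) * Emat ab i j)"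
        by (rule sum.mono_neutral_right) (use True in \<open>auto simp: Emat_def split: if_splits\<close>)
      then show ?thesis by (simp add: Emat_def)
    next
      case False
      then have "F i j = 0" using assms by (auto simp: wf_mat_def)
      moreover have "(\<Sum>ab\<in>{..<r} \<times> {..<c}. F (fst ab) (snd ab) * Emat ab i j) = 0"
        by (rule sum.neutral) (use False in \<open>auto simp: Emat_def\<close>)
      ultimately show ?thesis by simp
    qed
    finally show "F i j = (\<Sum>ab\<in>{..<r} \<times> {..<c}. mscale (F (fst ab) (snd ab)) (Emat ab)) i j" by simp
  qed
  have mem: "(\<Sum>ab\<in>{..<r} \<times> {..<c}. mscale (F (fst ab) (snd ab)) (Emat ab)) \<in> mm.span (Emat ` ({..<r} \<times> {..<c}))"
  proof (rule mm.span_sum)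
    fix ab assume ab: "ab \<in> {..<r} \<times> {..<c}"
    have "Emat ab \<in> mm.span (Emat ` ({..<r} \<times> {..<c}))" by (rule mm.span_base) (use ab in auto)
    from mm.span_scale[where x = "Emat ab" and c = "F (fst ab) (snd ab)", OF this]
    show "mscale (F (fst ab) (snd ab)) (Emat ab) \<in> mm.span (Emat ` ({..<r} \<times> {..<c}))" .
  qed
  show ?thesis by (subst eq) (rule mem)
qed

lemma vsupp_in_span:
  assumes "vsupp n v"
  shows "v \<in> vv.span (unitv ` {..<n})"
proof -
  have eq: "v = (\<Sum>a<n. vscale (v a) (unitv a))"
  proof (rule ext)
    fix i
    have "(\<Sum>a<n. vscale (v a) (unitv a)) i = (\<Sum>a<n. v a * unitv a i)" by (simp add: sum_fun_apply vscale_def)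
    also have "\<dots> = v i"
    proof (cases "i < n")
      case True then show ?thesis by (simp add: unitv_def mult_if_one)
    next
      case False then show ?thesis using assms by (simp add: unitv_def vsupp_def)
    qed
    finally show "v i = (\<Sum>a<n. vscale (v a) (unitv a)) i" by simp
  qed
  have mem: "(\<Sum>a<n. vscale (v a) (unitv a)) \<in> vv.span (unitv ` {..<n})"
  proof (rule vv.span_sum)
    fix a assume a: "a \<in> {..<n}"
    have "unitv a \<in> vv.span (unitv ` {..<n})" by (rule vv.span_base) (use a in auto)
    from vv.span_scale[where x = "unitv a" and c = "v a", OF this]
    show "vscale (v a) (unitv a) \<in> vv.span (unitv ` {..<n})" .
  qed
  show ?thesis by (subst eq) (rule mem)
qed

lemma mod_wf: "is_module A M \<Longrightarrow> p < adim A \<Longrightarrow> wf_mat (mdim M) (mdim M) (mact M p)"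
  by (simp add: is_module_def Let_def)

lemma hom_wf: "is_hom A M N F \<Longrightarrow> wf_mat (mdim M) (mdim N) F"
  by (simp add: is_hom_def)

lemma hom_eq: "is_hom A M N F \<Longrightarrow> p < adim A \<Longrightarrow> mmul (mdim M) (mact M p) F = mmul (mdim N) F (mact N p)"
  by (simp add: is_hom_def)

lemma factor_mono:
  assumes P: "is_module A P" and K: "is_module A K" and g: "is_hom A P R g" and k: "is_mono A K R \<kappa>"
    and rows: "\<forall>a<mdim P. \<exists>u. vsupp (mdim K) u \<and> vmul (mdim K) u \<kappa> = g a"
  shows "\<exists>g'. is_hom A P K g' \<and> mmul (mdim K) g' \<kappa> = g"
proof -
  define g' where "g' = (\<lambda>a. if a < mdim P then (SOME u. vsupp (mdim K) u \<and> vmul (mdim K) u \<kappa> = g a) else (\<lambda>_. 0))"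
  have gs: "vsupp (mdim K) (g' a) \<and> vmul (mdim K) (g' a) \<kappa> = g a" if "a < mdim P" for a
    using someI_ex[OF rows[rule_format, OF that]] that by (simp add: g'_def)
  have wfg': "wf_mat (mdim P) (mdim K) g'"
    unfolding wf_mat_def using gs by (auto simp: g'_def vsupp_def)
  have k1: "is_hom A K R \<kappa>" "inj_mat (mdim K) \<kappa>" using k by (auto simp: is_mono_def)
  have eq: "mmul (mdim K) g' \<kappa> = g"
  proof (rule ext)
    fix a show "mmul (mdim K) g' \<kappa> a = g a"
    proof (cases "a < mdim P")
      case True then show ?thesis using gs by (simp add: mmul_row)
    next
      case False
      then have "g a = (\<lambda>_. 0)" using hom_wf[OF g] by (auto simp: wf_mat_def)
      then show ?thesis using False by (simp add: mmul_row g'_def)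
    qed
  qed
  have "is_hom A P K g'"
    unfolding is_hom_def
  proof (intro conjI allI impI wfg')
    fix p assume p: "p < adim A"
    show "mmul (mdim P) (mact P p) g' = mmul (mdim K) g' (mact K p)"
    proof (rule cancel_right[OF k1(2)])
      show "wf_mat (mdim P) (mdim K) (mmul (mdim P) (mact P p) g')"
        using mod_wf[OF P p] wfg' by (rule wf_mmul)
      show "wf_mat (mdim P) (mdim K) (mmul (mdim K) g' (mact K p))"
        using wfg' mod_wf[OF K p] by (rule wf_mmul)
      have "mmul (mdim K) (mmul (mdim P) (mact P p) g') \<kappa> = mmul (mdim P) (mact P p) (mmul (mdim K) g' \<kappa>)"
        by (simp add: mmul_assoc)
      also have "\<dots> = mmul (mdim P) (mact P p) g" by (simp add: eq)
      also have "\<dots> = mmul (mdim R) g (mact R p)" using hom_eq[OF g p] .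
      also have "\<dots> = mmul (mdim R) (mmul (mdim K) g' \<kappa>) (mact R p)" by (simp add: eq)
      also have "\<dots> = mmul (mdim K) g' (mmul (mdim R) \<kappa> (mact R p))" by (simp add: mmul_assoc)
      also have "\<dots> = mmul (mdim K) g' (mmul (mdim K) (mact K p) \<kappa>)" using hom_eq[OF k1(1) p] by simp
      also have "\<dots> = mmul (mdim K) (mmul (mdim K) g' (mact K p)) \<kappa>" by (simp add: mmul_assoc)
      finally show "mmul (mdim K) (mmul (mdim P) (mact P p) g') \<kappa> = mmul (mdim K) (mmul (mdim K) g' (mact K p)) \<kappa>" .
    qed
  qed
  then show ?thesis using eq by blast
qed

lemma factor_epi:
  assumes P: "is_module A P" and S: "is_module A S" and M: "is_module A M"
    and e: "is_epi A P S e" and phi: "is_hom A P M \<phi>"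
    and ker: "\<forall>x. vsupp (mdim P) x \<and> vmul (mdim P) x e = (\<lambda>_. 0) \<longrightarrow> vmul (mdim P) x \<phi> = (\<lambda>_. 0)"
  shows "\<exists>\<psi>. is_hom A S M \<psi> \<and> mmul (mdim S) e \<psi> = \<phi>"
proof -
  have eh: "is_hom A P S e" and es: "surj_mat (mdim P) (mdim S) e" using e by (auto simp: is_epi_def)
  have ex: "\<exists>x. vsupp (mdim P) x \<and> vmul (mdim P) x e = unitv a" if "a < mdim S" for a
    using es vsupp_unit[OF that] unfolding surj_mat_def by blast
  define X where "X = (\<lambda>a. SOME x. vsupp (mdim P) x \<and> vmul (mdim P) x e = unitv a)"
  have Xs: "vsupp (mdim P) (X a) \<and> vmul (mdim P) (X a) e = unitv a" if "a < mdim S" for a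
    using someI_ex[OF ex[OF that]] by (simp add: X_def)
  define \<psi> where "\<psi> = (\<lambda>a. if a < mdim S then vmul (mdim P) (X a) \<phi> else (\<lambda>_. 0))"
  have wf\<psi>: "wf_mat (mdim S) (mdim M) \<psi>"
    using vsupp_vmul[OF hom_wf[OF phi]] unfolding wf_mat_def \<psi>_def vsupp_def by auto
  have key: "vmul (mdim S) (vmul (mdim P) x e) \<psi> = vmul (mdim P) x \<phi>" if x: "vsupp (mdim P) x" for x
  proof -
    define w where "w = vmul (mdim P) x e"
    have ws: "vsupp (mdim S) w" unfolding w_def by (rule vsupp_vmul[OF hom_wf[OF eh]])
    define y where "y = (\<lambda>i. \<Sum>a<mdim S. w a * X a i)"
    have ys: "vsupp (mdim P) y" using Xs unfolding y_def vsupp_def by auto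
    have "vmul (mdim P) y e = (\<lambda>j. \<Sum>a<mdim S. w a * vmul (mdim P) (X a) e j)"
      unfolding y_def by (rule vmul_sum)
    also have "\<dots> = (\<lambda>j. \<Sum>a<mdim S. w a * unitv a j)" using Xs by simp
    also have "\<dots> = w"
    proof (rule ext)
      fix j show "(\<Sum>a<mdim S. w a * unitv a j) = w j"
        using ws by (cases "j < mdim S") (auto simp: unitv_def mult_if_one vsupp_def)
    qed
    finally have ye: "vmul (mdim P) y e = w" .
    have "vmul (mdim P) (\<lambda>i. x i - y i) e = (\<lambda>_. 0)" by (simp add: vmul_diff ye w_def)
    moreover have "vsupp (mdim P) (\<lambda>i. x i - y i)" using x ys by (simp add: vsupp_def)
    ultimately have "vmul (mdim P) (\<lambda>i. x i - y i) \<phi> = (\<lambda>_. 0)" using ker by blast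
    then have xy: "vmul (mdim P) x \<phi> = vmul (mdim P) y \<phi>" by (simp add: vmul_diff fun_eq_iff)
    have "vmul (mdim P) y \<phi> = (\<lambda>j. \<Sum>a<mdim S. w a * vmul (mdim P) (X a) \<phi> j)"
      unfolding y_def by (rule vmul_sum)
    also have "\<dots> = vmul (mdim S) w \<psi>" by (simp add: vmul_def \<psi>_def)
    finally show ?thesis using xy w_def by simp
  qed
  have eq: "mmul (mdim S) e \<psi> = \<phi>"
  proof (rule ext)
    fix a show "mmul (mdim S) e \<psi> a = \<phi> a"
    proof (cases "a < mdim P")
      case True
      have "mmul (mdim S) e \<psi> a = vmul (mdim S) (vmul (mdim P) (unitv a) e) \<psi>"
        by (simp add: mmul_row vmul_unit[OF True])
      also have "\<dots> = vmul (mdim P) (unitv a) \<phi>" by (rule key[OF vsupp_unit[OF True]])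
      also have "\<dots> = \<phi> a" by (simp add: vmul_unit[OF True])
      finally show ?thesis .
    next
      case False
      then have "e a = (\<lambda>_. 0)" "\<phi> a = (\<lambda>_. 0)" using hom_wf[OF eh] hom_wf[OF phi] by (auto simp: wf_mat_def)
      then show ?thesis by (simp add: mmul_row)
    qed
  qed
  have "is_hom A S M \<psi>"
    unfolding is_hom_def
  proof (intro conjI allI impI wf\<psi>)
    fix p assume p: "p < adim A"
    show "mmul (mdim S) (mact S p) \<psi> = mmul (mdim M) \<psi> (mact M p)"
    proof (rule cancel_left_epi[OF es])
      show "wf_mat (mdim S) (mdim M) (mmul (mdim S) (mact S p) \<psi>)"
        using mod_wf[OF S p] wf\<psi> by (rule wf_mmul)
      show "wf_mat (mdim S) (mdim M) (mmul (mdim M) \<psi> (mact M p))"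
        using wf\<psi> mod_wf[OF M p] by (rule wf_mmul)
      have "mmul (mdim S) e (mmul (mdim S) (mact S p) \<psi>) = mmul (mdim S) (mmul (mdim S) e (mact S p)) \<psi>"
        by (simp add: mmul_assoc)
      also have "\<dots> = mmul (mdim S) (mmul (mdim P) (mact P p) e) \<psi>" using hom_eq[OF eh p] by simp
      also have "\<dots> = mmul (mdim P) (mact P p) (mmul (mdim S) e \<psi>)" by (simp add: mmul_assoc)
      also have "\<dots> = mmul (mdim P) (mact P p) \<phi>" by (simp add: eq)
      also have "\<dots> = mmul (mdim M) \<phi> (mact M p)" using hom_eq[OF phi p] .
      also have "\<dots> = mmul (mdim M) (mmul (mdim S) e \<psi>) (mact M p)" by (simp add: eq)
      also have "\<dots> = mmul (mdim S) e (mmul (mdim M) \<psi> (mact M p))" by (simp add: mmul_assoc)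
      finally show "mmul (mdim S) e (mmul (mdim S) (mact S p) \<psi>) = mmul (mdim S) e (mmul (mdim M) \<psi> (mact M p))" .
    qed
  qed
  then show ?thesis using eq by blast
qed

lemma wf_lincomb: "(\<And>s. s \<in> S \<Longrightarrow> wf_mat r c (G s)) \<Longrightarrow> wf_mat r c (\<lambda>i j. \<Sum>s\<in>S. a s * (G s i j::'k::comm_semiring_1))"
  by (simp add: wf_mat_def)

lemma module_pullback:
  assumes M: "is_module A M" and inj: "inj_mat r \<iota>" and wf: "wf_mat r (mdim M) \<iota>"
    and X: "\<forall>p<adim A. wf_mat r r (X p) \<and> mmul r (X p) \<iota> = mmul (mdim M) \<iota> (mact M p)"
  shows "is_module A \<lparr>mdim = r, mact = X\<rparr>"
proof -
  let ?d = "adim A" and ?n = "mdim M"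
  have Mm: "mmul ?n (mact M p) (mact M q) = (\<lambda>i j. \<Sum>s<?d. amul A p q s * mact M s i j)"
    if "p < ?d" "q < ?d" for p q using M that by (simp add: is_module_def Let_def)
  have Mo: "(\<lambda>i j. \<Sum>p<?d. aone A p * mact M p i j) = idm ?n" using M by (simp add: is_module_def Let_def)
  have mul: "mmul r (X p) (X q) = (\<lambda>i j. \<Sum>s<?d. amul A p q s * X s i j)" if p: "p < ?d" and q: "q < ?d" for p q
  proof (rule cancel_right[OF inj])
    show "wf_mat r r (mmul r (X p) (X q))" using X p q by (auto intro: wf_mmul)
    show "wf_mat r r (\<lambda>i j. \<Sum>s<?d. amul A p q s * X s i j)" using X by (auto intro: wf_lincomb)
    have "mmul r (mmul r (X p) (X q)) \<iota> = mmul r (X p) (mmul r (X q) \<iota>)" by (simp add: mmul_assoc)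
    also have "\<dots> = mmul r (X p) (mmul ?n \<iota> (mact M q))" using X q by simp
    also have "\<dots> = mmul ?n (mmul r (X p) \<iota>) (mact M q)" by (simp add: mmul_assoc)
    also have "\<dots> = mmul ?n (mmul ?n \<iota> (mact M p)) (mact M q)" using X p by simp
    also have "\<dots> = mmul ?n \<iota> (mmul ?n (mact M p) (mact M q))" by (simp add: mmul_assoc)
    also have "\<dots> = mmul ?n \<iota> (\<lambda>i j. \<Sum>s<?d. amul A p q s * mact M s i j)" using Mm[OF p q] by simp
    also have "\<dots> = (\<lambda>i j. \<Sum>s<?d. amul A p q s * mmul ?n \<iota> (mact M s) i j)" by (rule mmul_lin_right)
    also have "\<dots> = (\<lambda>i j. \<Sum>s<?d. amul A p q s * mmul r (X s) \<iota> i j)"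
      using X by (intro ext sum.cong) auto
    also have "\<dots> = mmul r (\<lambda>i j. \<Sum>s<?d. amul A p q s * X s i j) \<iota>" by (rule mmul_lin_left[symmetric])
    finally show "mmul r (mmul r (X p) (X q)) \<iota> = mmul r (\<lambda>i j. \<Sum>s<?d. amul A p q s * X s i j) \<iota>" .
  qed
  have one: "(\<lambda>i j. \<Sum>p<?d. aone A p * X p i j) = idm r"
  proof (rule cancel_right[OF inj])
    show "wf_mat r r (\<lambda>i j. \<Sum>p<?d. aone A p * X p i j)" using X by (auto intro: wf_lincomb)
    show "wf_mat r r (idm r)" by (rule wf_idm)
    have "mmul r (\<lambda>i j. \<Sum>p<?d. aone A p * X p i j) \<iota> = (\<lambda>i j. \<Sum>p<?d. aone A p * mmul r (X p) \<iota> i j)"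
      by (rule mmul_lin_left)
    also have "\<dots> = (\<lambda>i j. \<Sum>p<?d. aone A p * mmul ?n \<iota> (mact M p) i j)"
      using X by (intro ext sum.cong) auto
    also have "\<dots> = mmul ?n \<iota> (\<lambda>i j. \<Sum>p<?d. aone A p * mact M p i j)" by (rule mmul_lin_right[symmetric])
    also have "\<dots> = \<iota>" using Mo mmul_idm_right[OF wf] by simp
    also have "\<dots> = mmul r (idm r) \<iota>" using mmul_idm_left[OF wf] by simp
    finally show "mmul r (\<lambda>i j. \<Sum>p<?d. aone A p * X p i j) \<iota> = mmul r (idm r) \<iota>" .
  qed
  show ?thesis unfolding is_module_def Let_def using X mul one by simp
qed

lemma submodule:
  assumes M: "is_module A M" and WV: "W \<subseteq> {v. vsupp (mdim M) v}" and sub: "vv.subspace W"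
    and cl: "\<forall>w\<in>W. \<forall>p<adim A. vmul (mdim M) w (mact M p) \<in> W"
  shows "\<exists>V \<iota>. is_module A V \<and> is_mono A V M \<iota> \<and> {vmul (mdim V) u \<iota> | u. vsupp (mdim V) u} = W \<and> mdim V = vv.dim W"
proof -
  let ?n = "mdim M"
  obtain B where B: "B \<subseteq> W" "vv.independent B" "W \<subseteq> vv.span B" "card B = vv.dim W"
    using vv.basis_exists by blast
  have "B \<subseteq> vv.span (unitv ` {..<?n})" using B(1) WV vsupp_in_span by blast
  then have finB: "finite B" using vv.independent_span_bound[OF finite_imageI[OF finite_lessThan] B(2)] by blast
  obtain bs where bs: "set bs = B" "distinct bs" using finite_distinct_list[OF finB] by blast
  define r where "r = length bs"
  have rc: "r = vv.dim W" using bs B(4) r_def distinct_card by metis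
  have spanW: "vv.span B = W" using vv.span_subspace[OF B(1) B(3) sub] .
  define \<iota> where "\<iota> = (\<lambda>a j. if a < r then (bs!a) j else 0)"
  have vmi: "vmul r u \<iota> = (\<Sum>l<r. vscale (u l) (bs!l))" for u
    unfolding vmul_def \<iota>_def by (rule ext) (simp add: sum_fun_apply vscale_def)
  have img: "{vmul r u \<iota> | u. vsupp r u} = W"
  proof -
    have "W = {(\<Sum>l<r. vscale (c l) (bs!l)) | c. True}"
      using vv.span_list[OF bs(2)] spanW bs(1) r_def by simp
    also have "\<dots> = {vmul r u \<iota> | u. vsupp r u}"
    proof (intro set_eqI iffI)
      fix x assume "x \<in> {(\<Sum>l<r. vscale (c l) (bs!l)) | c. True}"
      then obtain c where c: "x = (\<Sum>l<r. vscale (c l) (bs!l))" by blast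
      have "x = vmul r (\<lambda>l. if l < r then c l else 0) \<iota>" unfolding c vmi by (rule sum.cong) auto
      moreover have "vsupp r (\<lambda>l. if l < r then c l else 0)" by (simp add: vsupp_def)
      ultimately show "x \<in> {vmul r u \<iota> | u. vsupp r u}" by blast
    next
      fix x assume "x \<in> {vmul r u \<iota> | u. vsupp r u}"
      then obtain u where "x = vmul r u \<iota>" by blast
      then have "x = (\<Sum>l<r. vscale (u l) (bs!l))" by (simp add: vmi)
      then show "x \<in> {(\<Sum>l<r. vscale (c l) (bs!l)) | c. True}" by blast
    qed
    finally show ?thesis by simp
  qed
  have indep: "\<forall>c. (\<Sum>l<r. vscale (c l) (bs!l)) = 0 \<longrightarrow> (\<forall>l<r. c l = 0)"
    using vv.indepL_from[OF bs(2)] bs(1) B(2) r_def by simp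
  have inj: "inj_mat r \<iota>"
    unfolding inj_mat_def
  proof (intro allI impI)
    fix u assume u: "vsupp r u" "vmul r u \<iota> = (\<lambda>_. 0)"
    then have "(\<Sum>l<r. vscale (u l) (bs!l)) = 0" by (simp add: vmi zero_fun_def)
    then have "\<forall>l<r. u l = 0" using indep by blast
    then show "u = (\<lambda>_. 0)" using u(1) by (auto simp: vsupp_def fun_eq_iff not_less[symmetric])
  qed
  have bsW: "bs!a \<in> W" if "a < r" for a using that bs B(1) r_def nth_mem by blast
  have wf: "wf_mat r ?n \<iota>"
    unfolding wf_mat_def \<iota>_def using bsW WV by (auto simp: vsupp_def)
  have ex: "\<exists>u. vsupp r u \<and> vmul r u \<iota> = vmul ?n (bs!a) (mact M p)" if "a < r" "p < adim A" for a p
  proof -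
    have "vmul ?n (bs!a) (mact M p) \<in> W" using cl bsW that by blast
    then have "vmul ?n (bs!a) (mact M p) \<in> {vmul r u \<iota> | u. vsupp r u}" by (simp only: img)
    then obtain u where "vmul ?n (bs!a) (mact M p) = vmul r u \<iota>" "vsupp r u" by blast
    then show ?thesis by metis
  qed
  define X where "X = (\<lambda>p a. if a < r then (SOME u. vsupp r u \<and> vmul r u \<iota> = vmul ?n (bs!a) (mact M p)) else (\<lambda>_. 0))"
  have Xs: "vsupp r (X p a) \<and> vmul r (X p a) \<iota> = vmul ?n (bs!a) (mact M p)" if "a < r" "p < adim A" for a p
    using someI_ex[OF ex[OF that]] that by (simp add: X_def)
  have X: "\<forall>p<adim A. wf_mat r r (X p) \<and> mmul r (X p) \<iota> = mmul ?n \<iota> (mact M p)"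
  proof (intro allI impI conjI)
    fix p assume p: "p < adim A"
    show "wf_mat r r (X p)" unfolding wf_mat_def using Xs[OF _ p] by (auto simp: X_def vsupp_def)
    show "mmul r (X p) \<iota> = mmul ?n \<iota> (mact M p)"
    proof (rule ext)
      fix a show "mmul r (X p) \<iota> a = mmul ?n \<iota> (mact M p) a"
        using Xs[OF _ p] by (cases "a < r") (auto simp: mmul_row X_def \<iota>_def)
    qed
  qed
  define V where "V = \<lparr>mdim = r, mact = X\<rparr>"
  have Vm: "is_module A V" unfolding V_def by (rule module_pullback[OF M inj wf X])
  have "is_mono A V M \<iota>" unfolding is_mono_def is_hom_def V_def using wf X inj by simp
  moreover have "{vmul (mdim V) u \<iota> | u. vsupp (mdim V) u} = W" using img by (simp add: V_def)
  moreover have "mdim V = vv.dim W" using rc by (simp add: V_def)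
  ultimately show ?thesis using Vm by blast
qed

lemma full_dim_sub:
  assumes WV: "W \<subseteq> {v. vsupp n v}" and sub: "vv.subspace W" and d: "vv.dim W = n"
  shows "{v. vsupp n v} \<subseteq> W"
proof -
  obtain B where B: "B \<subseteq> W" "vv.independent B" "W \<subseteq> vv.span B" "card B = vv.dim W"
    using vv.basis_exists by blast
  have BT: "B \<subseteq> vv.span (unitv ` {..<n})" using B(1) WV vsupp_in_span by blast
  have "card (unitv ` {..<n}) \<le> card B" using card_image_le[of "{..<n}" unitv] B(4) d by simp
  then have "unitv ` {..<n} \<subseteq> vv.span B"
    using vv.full_span[OF finite_imageI[OF finite_lessThan] B(2) BT] by blast
  moreover have "vv.span B \<subseteq> W" using vv.span_minimal[OF B(1) sub] .
  ultimately have "unitv ` {..<n} \<subseteq> W" by blast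
  then have "vv.span (unitv ` {..<n}) \<subseteq> W" using vv.span_minimal[OF _ sub] by blast
  then show ?thesis using vsupp_in_span by blast
qed

lemma vmul_idm: "vsupp n x \<Longrightarrow> vmul n x (idm n) = x"
  unfolding vmul_def idm_def vsupp_def
  by (rule ext) (auto simp: mult_if_one)

lemma idm_row: "a < n \<Longrightarrow> idm n a = unitv a"
  by (auto simp: idm_def unitv_def fun_eq_iff)

lemma image_sub:
  assumes M: "is_module A M" and N: "is_module A N" and f: "is_hom A M N f"
  shows "\<exists>V \<iota>. is_module A V \<and> is_mono A V N \<iota> \<and>
     {vmul (mdim V) u \<iota> | u. vsupp (mdim V) u} = {vmul (mdim M) x f | x. vsupp (mdim M) x} \<and>
     mdim V = vv.dim {vmul (mdim M) x f | x. vsupp (mdim M) x} \<and>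
     vv.subspace {vmul (mdim M) x f | x. vsupp (mdim M) x}"
proof -
  let ?W = "{vmul (mdim M) x f | x. vsupp (mdim M) x}"
  have WV: "?W \<subseteq> {v. vsupp (mdim N) v}" using vsupp_vmul[OF hom_wf[OF f]] by blast
  have sub: "vv.subspace ?W"
    unfolding vv.subspace_def
  proof (intro conjI ballI allI)
    show "0 \<in> ?W"
    proof -
      have "vsupp (mdim M) (\<lambda>_. 0)" by (simp add: vsupp_def)
      then have "vmul (mdim M) (\<lambda>_. 0) f \<in> ?W" by blast
      then show ?thesis by (simp add: zero_fun_def)
    qed
  next
    fix x y assume "x \<in> ?W" "y \<in> ?W"
    then obtain a b where ab: "x = vmul (mdim M) a f" "vsupp (mdim M) a" "y = vmul (mdim M) b f" "vsupp (mdim M) b" by blast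
    have "x + y = vmul (mdim M) (\<lambda>i. a i + b i) f" by (simp add: ab vmul_add plus_fun_def)
    moreover have "vsupp (mdim M) (\<lambda>i. a i + b i)" using ab by (simp add: vsupp_def)
    ultimately show "x + y \<in> ?W" by blast
  next
    fix c x assume "x \<in> ?W"
    then obtain a where ab: "x = vmul (mdim M) a f" "vsupp (mdim M) a" by blast
    have "vscale c x = vmul (mdim M) (\<lambda>i. c * a i) f" by (simp add: ab vmul_scale vscale_def)
    moreover have "vsupp (mdim M) (\<lambda>i. c * a i)" using ab by (simp add: vsupp_def)
    ultimately show "vscale c x \<in> ?W" by blast
  qed
  have cl: "\<forall>w\<in>?W. \<forall>p<adim A. vmul (mdim N) w (mact N p) \<in> ?W"
  proof (intro ballI allI impI)
    fix w p assume "w \<in> ?W" and p: "p < adim A"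
    then obtain x where x: "w = vmul (mdim M) x f" "vsupp (mdim M) x" by blast
    have "vmul (mdim N) w (mact N p) = vmul (mdim M) x (mmul (mdim N) f (mact N p))" by (simp add: x vmul_mmul)
    also have "\<dots> = vmul (mdim M) x (mmul (mdim M) (mact M p) f)" using hom_eq[OF f p] by simp
    also have "\<dots> = vmul (mdim M) (vmul (mdim M) x (mact M p)) f" by (simp add: vmul_mmul)
    finally show "vmul (mdim N) w (mact N p) \<in> ?W" using vsupp_vmul[OF mod_wf[OF M p]] by blast
  qed
  from submodule[OF N WV sub cl] sub show ?thesis by blast
qed

lemma kernel_sub:
  assumes M: "is_module A M" and N: "is_module A N" and f: "is_hom A M N f"
  shows "\<exists>V \<iota>. is_module A V \<and> is_mono A V M \<iota> \<and>
     {vmul (mdim V) u \<iota> | u. vsupp (mdim V) u} = {x. vsupp (mdim M) x \<and> vmul (mdim M) x f = (\<lambda>_. 0)} \<and>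
     mdim V = vv.dim {x. vsupp (mdim M) x \<and> vmul (mdim M) x f = (\<lambda>_. 0)} \<and>
     vv.subspace {x. vsupp (mdim M) x \<and> vmul (mdim M) x f = (\<lambda>_. 0)}"
proof -
  let ?W = "{x. vsupp (mdim M) x \<and> vmul (mdim M) x f = (\<lambda>_. 0)}"
  have WV: "?W \<subseteq> {v. vsupp (mdim M) v}" by blast
  have sub: "vv.subspace ?W"
    unfolding vv.subspace_def
    by (auto simp: zero_fun_def plus_fun_def vscale_def vsupp_def vmul_add vmul_scale)
  have cl: "\<forall>w\<in>?W. \<forall>p<adim A. vmul (mdim M) w (mact M p) \<in> ?W"
  proof (intro ballI allI impI)
    fix w p assume w: "w \<in> ?W" and p: "p < adim A"
    have "vmul (mdim M) (vmul (mdim M) w (mact M p)) f = vmul (mdim M) w (mmul (mdim M) (mact M p) f)"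
      by (simp add: vmul_mmul)
    also have "\<dots> = vmul (mdim M) w (mmul (mdim N) f (mact N p))" using hom_eq[OF f p] by simp
    also have "\<dots> = vmul (mdim N) (vmul (mdim M) w f) (mact N p)" by (simp add: vmul_mmul)
    also have "\<dots> = (\<lambda>_. 0)" using w by simp
    finally show "vmul (mdim M) w (mact M p) \<in> ?W" using vsupp_vmul[OF mod_wf[OF M p]] by blast
  qed
  from submodule[OF M WV sub cl] sub show ?thesis by blast
qed

lemma epi_comp:
  fixes A :: "'k::field alg"
  assumes "is_epi A M N F" "is_epi A N L G"
  shows "is_epi A M L (mmul (mdim N) F G)"
proof -
  have h: "is_hom A M L (mmul (mdim N) F G)" using assms by (auto simp: is_epi_def intro: hom_comp)
  have "surj_mat (mdim M) (mdim L) (mmul (mdim N) F G)"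
    unfolding surj_mat_def
  proof (intro allI impI)
    fix w :: "nat \<Rightarrow> 'k" assume "vsupp (mdim L) w"
    then obtain y where y: "vsupp (mdim N) y" "vmul (mdim N) y G = w" using assms(2) by (auto simp: is_epi_def surj_mat_def)
    then obtain x where x: "vsupp (mdim M) x" "vmul (mdim M) x F = y" using assms(1) by (auto simp: is_epi_def surj_mat_def)
    have "vmul (mdim M) x (mmul (mdim N) F G) = w" using x y by (simp add: vmul_mmul[symmetric])
    then show "\<exists>v. vsupp (mdim M) v \<and> vmul (mdim M) v (mmul (mdim N) F G) = w" using x by blast
  qed
  then show ?thesis using h by (simp add: is_epi_def)
qed

lemma in_image_set: "x \<in> {vmul n u F | u. vsupp n u} \<longleftrightarrow> (\<exists>u. vsupp n u \<and> vmul n u F = x)"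
  by blast

lemma simple_quot_iso:
  fixes A :: "'k::field alg"
  assumes pc: "proj_cover A P S e" and Ss: "simple_mod A S" and Ms: "simple_mod A M"
    and phi: "is_epi A P M \<phi>"
  shows "isomorphic A M S"
proof -
  have Pm: "is_module A P" using pc by (simp add: proj_cover_def projective_mod_def)
  have Sm: "is_module A S" using Ss by (simp add: simple_mod_def)
  have Mm: "is_module A M" and M0: "0 < mdim M" using Ms by (auto simp: simple_mod_def)
  have ee: "is_epi A P S e" using pc by (simp add: proj_cover_def)
  have eh: "is_hom A P S e" and es: "surj_mat (mdim P) (mdim S) e" using ee by (auto simp: is_epi_def)
  have ph: "is_hom A P M \<phi>" and ps: "surj_mat (mdim P) (mdim M) \<phi>" using phi by (auto simp: is_epi_def)
  have u0: "vsupp (mdim M) (unitv 0 :: nat \<Rightarrow> 'k)" using vsupp_unit[OF M0] .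
  have u0nz: "(unitv 0 :: nat \<Rightarrow> 'k) \<noteq> (\<lambda>_. 0)" by (auto simp: unitv_def fun_eq_iff)
  have phinz: "\<exists>x. vsupp (mdim P) x \<and> vmul (mdim P) x \<phi> \<noteq> (\<lambda>_. 0)"
    using ps u0 u0nz unfolding surj_mat_def by metis
  obtain Nm ne where Nm: "is_module A Nm" "is_mono A Nm P ne"
    "{vmul (mdim Nm) u ne | u. vsupp (mdim Nm) u} = {x. vsupp (mdim P) x \<and> vmul (mdim P) x e = (\<lambda>_. 0)}"
    using kernel_sub[OF Pm Sm eh] by blast
  have neh: "is_hom A Nm P ne" using Nm(2) by (simp add: is_mono_def)
  define n\<phi> where "n\<phi> = mmul (mdim P) ne \<phi>"
  have nph: "is_hom A Nm M n\<phi>" unfolding n\<phi>_def by (rule hom_comp[OF neh ph])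
  have kerphi: "\<forall>x. vsupp (mdim P) x \<and> vmul (mdim P) x e = (\<lambda>_. 0) \<longrightarrow> vmul (mdim P) x \<phi> = (\<lambda>_. 0)"
  proof (cases "surj_mat (mdim Nm) (mdim M) n\<phi>")
    case True
    obtain Q nq where Q: "is_module A Q" "is_mono A Q P nq"
      "{vmul (mdim Q) u nq | u. vsupp (mdim Q) u} = {x. vsupp (mdim P) x \<and> vmul (mdim P) x \<phi> = (\<lambda>_. 0)}"
      using kernel_sub[OF Pm Mm ph] by blast
    have nqh: "is_hom A Q P nq" using Q(2) by (simp add: is_mono_def)
    have "surj_mat (mdim Q) (mdim S) (mmul (mdim P) nq e)"
      unfolding surj_mat_def
    proof (intro allI impI)
      fix w :: "nat \<Rightarrow> 'k" assume w: "vsupp (mdim S) w"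
      obtain x where x: "vsupp (mdim P) x" "vmul (mdim P) x e = w" using es w by (auto simp: surj_mat_def)
      have "vsupp (mdim M) (vmul (mdim P) x \<phi>)" by (rule vsupp_vmul[OF hom_wf[OF ph]])
      then obtain y' where y': "vsupp (mdim Nm) y'" "vmul (mdim Nm) y' n\<phi> = vmul (mdim P) x \<phi>"
        using True by (auto simp: surj_mat_def)
      define y where "y = vmul (mdim Nm) y' ne"
      have "y \<in> {vmul (mdim Nm) u ne | u. vsupp (mdim Nm) u}" using y' y_def by blast
      then have y: "vsupp (mdim P) y" "vmul (mdim P) y e = (\<lambda>_. 0)" using Nm(3) by auto
      have yphi: "vmul (mdim P) y \<phi> = vmul (mdim P) x \<phi>"
        using y'(2) by (simp add: y_def n\<phi>_def vmul_mmul)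
      define z0 where "z0 = (\<lambda>i. x i - y i)"
      have "vsupp (mdim P) z0" using x y by (simp add: z0_def vsupp_def)
      moreover have "vmul (mdim P) z0 \<phi> = (\<lambda>_. 0)" by (simp add: z0_def vmul_diff yphi)
      ultimately have "z0 \<in> {vmul (mdim Q) u nq | u. vsupp (mdim Q) u}" using Q(3) by blast
      then obtain z where z: "vsupp (mdim Q) z" "vmul (mdim Q) z nq = z0" by blast
      have "vmul (mdim Q) z (mmul (mdim P) nq e) = vmul (mdim P) z0 e" by (simp add: vmul_mmul[symmetric] z(2))
      also have "\<dots> = w" by (simp add: z0_def vmul_diff x(2) y(2))
      finally show "\<exists>v. vsupp (mdim Q) v \<and> vmul (mdim Q) v (mmul (mdim P) nq e) = w" using z by blast
    qed
    then have "surj_mat (mdim Q) (mdim P) nq"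
      using pc Q(1) nqh unfolding proj_cover_def by blast
    then have "\<forall>x. vsupp (mdim P) x \<longrightarrow> vmul (mdim P) x \<phi> = (\<lambda>_. 0)"
      using Q(3) unfolding surj_mat_def by blast
    then show ?thesis using phinz by blast
  next
    case False
    obtain Vw iw where Vw: "is_module A Vw" "is_mono A Vw M iw"
      "{vmul (mdim Vw) u iw | u. vsupp (mdim Vw) u} = {vmul (mdim Nm) x n\<phi> | x. vsupp (mdim Nm) x}"
      "mdim Vw = vv.dim {vmul (mdim Nm) x n\<phi> | x. vsupp (mdim Nm) x}"
      "vv.subspace {vmul (mdim Nm) x n\<phi> | x. vsupp (mdim Nm) x}"
      using image_sub[OF Nm(1) Mm nph] by blast
    have "mdim Vw = 0 \<or> mdim Vw = mdim M" using Ms Vw(1,2) unfolding simple_mod_def by blast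
    moreover have "mdim Vw \<noteq> mdim M"
    proof
      assume eq: "mdim Vw = mdim M"
      have "{vmul (mdim Nm) x n\<phi> | x. vsupp (mdim Nm) x} \<subseteq> {v. vsupp (mdim M) v}"
        using vsupp_vmul[OF hom_wf[OF nph]] by blast
      from full_dim_sub[OF this Vw(5)] Vw(4) eq
      have "{v. vsupp (mdim M) v} \<subseteq> {vmul (mdim Nm) x n\<phi> | x. vsupp (mdim Nm) x}" by simp
      then have "surj_mat (mdim Nm) (mdim M) n\<phi>" unfolding surj_mat_def by blast
      then show False using False by simp
    qed
    ultimately have z: "mdim Vw = 0" by blast
    have zero: "vmul (mdim Nm) y n\<phi> = (\<lambda>_. 0)" if "vsupp (mdim Nm) y" for y
    proof -
      have "vmul (mdim Nm) y n\<phi> \<in> {vmul (mdim Vw) u iw | u. vsupp (mdim Vw) u}" using Vw(3) that by blast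
      then show ?thesis using z by auto
    qed
    show ?thesis
    proof (intro allI impI)
      fix x assume "vsupp (mdim P) x \<and> vmul (mdim P) x e = (\<lambda>_. 0)"
      then have "x \<in> {vmul (mdim Nm) u ne | u. vsupp (mdim Nm) u}" using Nm(3) by blast
      then obtain y where y: "vsupp (mdim Nm) y" "vmul (mdim Nm) y ne = x" by blast
      have "vmul (mdim P) x \<phi> = vmul (mdim Nm) y n\<phi>" by (simp add: y(2)[symmetric] n\<phi>_def vmul_mmul)
      then show "vmul (mdim P) x \<phi> = (\<lambda>_. 0)" using zero[OF y(1)] by simp
    qed
  qed
  obtain \<psi> where psi: "is_hom A S M \<psi>" "mmul (mdim S) e \<psi> = \<phi>"
    using factor_epi[OF Pm Sm Mm ee ph kerphi] by blast
  have xpsi: "vmul (mdim P) x \<phi> = vmul (mdim S) (vmul (mdim P) x e) \<psi>" for x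
    by (simp add: vmul_mmul psi(2))
  have psurj: "surj_mat (mdim S) (mdim M) \<psi>"
    unfolding surj_mat_def
  proof (intro allI impI)
    fix w :: "nat \<Rightarrow> 'k" assume "vsupp (mdim M) w"
    then obtain x where "vsupp (mdim P) x" "vmul (mdim P) x \<phi> = w" using ps by (auto simp: surj_mat_def)
    then show "\<exists>v. vsupp (mdim S) v \<and> vmul (mdim S) v \<psi> = w"
      using xpsi vsupp_vmul[OF hom_wf[OF eh]] by metis
  qed
  obtain Kp kp where Kp: "is_module A Kp" "is_mono A Kp S kp"
    "{vmul (mdim Kp) u kp | u. vsupp (mdim Kp) u} = {x. vsupp (mdim S) x \<and> vmul (mdim S) x \<psi> = (\<lambda>_. 0)}"
    "mdim Kp = vv.dim {x. vsupp (mdim S) x \<and> vmul (mdim S) x \<psi> = (\<lambda>_. 0)}"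
    "vv.subspace {x. vsupp (mdim S) x \<and> vmul (mdim S) x \<psi> = (\<lambda>_. 0)}"
    using kernel_sub[OF Sm Mm psi(1)] by blast
  have "mdim Kp = 0 \<or> mdim Kp = mdim S" using Ss Kp(1,2) unfolding simple_mod_def by blast
  moreover have "mdim Kp \<noteq> mdim S"
  proof
    assume eq: "mdim Kp = mdim S"
    have "{x. vsupp (mdim S) x \<and> vmul (mdim S) x \<psi> = (\<lambda>_. 0)} \<subseteq> {v. vsupp (mdim S) v}" by blast
    from full_dim_sub[OF this Kp(5)] Kp(4) eq
    have all: "\<forall>v. vsupp (mdim S) v \<longrightarrow> vmul (mdim S) v \<psi> = (\<lambda>_. 0)" by auto
    obtain x where "vsupp (mdim P) x" "vmul (mdim P) x \<phi> \<noteq> (\<lambda>_. 0)" using phinz by blast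
    then show False using all xpsi vsupp_vmul[OF hom_wf[OF eh]] by metis
  qed
  ultimately have kz: "mdim Kp = 0" by blast
  have pinj: "inj_mat (mdim S) \<psi>"
    unfolding inj_mat_def
  proof (intro allI impI)
    fix v :: "nat \<Rightarrow> 'k" assume "vsupp (mdim S) v" "vmul (mdim S) v \<psi> = (\<lambda>_. 0)"
    then have "v \<in> {vmul (mdim Kp) u kp | u. vsupp (mdim Kp) u}" using Kp(3) by blast
    then show "v = (\<lambda>_. 0)" using kz by auto
  qed
  have pmono: "is_mono A S M \<psi>" using psi(1) pinj by (simp add: is_mono_def)
  have rows: "\<forall>a<mdim M. \<exists>u. vsupp (mdim S) u \<and> vmul (mdim S) u \<psi> = idm (mdim M) a"
    using psurj vsupp_unit idm_row unfolding surj_mat_def by metis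
  obtain G where G: "is_hom A M S G" "mmul (mdim S) G \<psi> = idm (mdim M)"
    using factor_mono[OF Mm Sm hom_idm[OF Mm] pmono rows] by blast
  have Ginj: "inj_mat (mdim M) G"
    unfolding inj_mat_def
  proof (intro allI impI)
    fix x :: "nat \<Rightarrow> 'k" assume x: "vsupp (mdim M) x" "vmul (mdim M) x G = (\<lambda>_. 0)"
    have "x = vmul (mdim M) x (idm (mdim M))" using vmul_idm[OF x(1)] by simp
    also have "\<dots> = vmul (mdim S) (vmul (mdim M) x G) \<psi>" by (simp add: vmul_mmul G(2))
    also have "\<dots> = (\<lambda>_. 0)" using x(2) by simp
    finally show "x = (\<lambda>_. 0)" .
  qed
  have pG: "mmul (mdim M) \<psi> G = idm (mdim S)"
  proof (rule cancel_right[OF pinj])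
    show "wf_mat (mdim S) (mdim S) (mmul (mdim M) \<psi> G)"
      using hom_wf[OF psi(1)] hom_wf[OF G(1)] by (rule wf_mmul)
    show "wf_mat (mdim S) (mdim S) (idm (mdim S))" by (rule wf_idm)
    have "mmul (mdim S) (mmul (mdim M) \<psi> G) \<psi> = mmul (mdim M) \<psi> (mmul (mdim S) G \<psi>)" by (simp add: mmul_assoc)
    also have "\<dots> = \<psi>" using G(2) mmul_idm_right[OF hom_wf[OF psi(1)]] by simp
    also have "\<dots> = mmul (mdim S) (idm (mdim S)) \<psi>" using mmul_idm_left[OF hom_wf[OF psi(1)]] by simp
    finally show "mmul (mdim S) (mmul (mdim M) \<psi> G) \<psi> = mmul (mdim S) (idm (mdim S)) \<psi>" .
  qed
  have Gsurj: "surj_mat (mdim M) (mdim S) G"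
    unfolding surj_mat_def
  proof (intro allI impI)
    fix w :: "nat \<Rightarrow> 'k" assume w: "vsupp (mdim S) w"
    have "vmul (mdim M) (vmul (mdim S) w \<psi>) G = w" by (simp add: vmul_mmul pG vmul_idm[OF w])
    then show "\<exists>v. vsupp (mdim M) v \<and> vmul (mdim M) v G = w" using vsupp_vmul[OF hom_wf[OF psi(1)]] by blast
  qed
  show ?thesis unfolding isomorphic_def is_mono_def is_epi_def using G(1) Ginj Gsurj by blast
qed

lemma factor_through_top:
  fixes A :: "'k::field alg"
  assumes pc: "proj_cover A Pi (Sf i) e" and Ss: "simple_mod A (Sf i)" and i: "i \<in> I0"
    and K: "is_module A K" and g: "is_hom A Pi K g" and ls: "largest_sub A Sf I0 K U \<iota>"
  shows "\<exists>g''. is_hom A Pi U g'' \<and> mmul (mdim U) g'' \<iota> = g"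
proof -
  have Pm: "is_module A Pi" using pc by (simp add: proj_cover_def projective_mod_def)
  obtain V k where V: "is_module A V" "is_mono A V K k"
      "{vmul (mdim V) u k | u. vsupp (mdim V) u} = {vmul (mdim Pi) x g | x. vsupp (mdim Pi) x}"
    using image_sub[OF Pm K g] by blast
  have kinj: "inj_mat (mdim V) k" using V(2) by (simp add: is_mono_def)
  have rows: "\<forall>a<mdim Pi. \<exists>u. vsupp (mdim V) u \<and> vmul (mdim V) u k = g a"
  proof (intro allI impI)
    fix a assume a: "a < mdim Pi"
    have "g a \<in> {vmul (mdim Pi) x g | x. vsupp (mdim Pi) x}"
    proof (rule CollectI, rule exI[of _ "unitv a"], rule conjI)
      show "g a = vmul (mdim Pi) (unitv a) g" by (rule vmul_unit[OF a, symmetric])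
      show "vsupp (mdim Pi) (unitv a)" by (rule vsupp_unit[OF a])
    qed
    then have "g a \<in> {vmul (mdim V) u k | u. vsupp (mdim V) u}" by (simp only: V(3))
    then show "\<exists>u. vsupp (mdim V) u \<and> vmul (mdim V) u k = g a" by (simp only: in_image_set)
  qed
  obtain q where q: "is_hom A Pi V q" "mmul (mdim V) q k = g"
    using factor_mono[OF Pm V(1) g V(2) rows] by blast
  have qsurj: "surj_mat (mdim Pi) (mdim V) q"
    unfolding surj_mat_def
  proof (intro allI impI)
    fix w :: "nat \<Rightarrow> 'k" assume w: "vsupp (mdim V) w"
    have "vmul (mdim V) w k \<in> {vmul (mdim V) u k | u. vsupp (mdim V) u}" using w by (simp only: in_image_set) blast
    then have "vmul (mdim V) w k \<in> {vmul (mdim Pi) x g | x. vsupp (mdim Pi) x}" by (simp only: V(3))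
    then obtain x where x: "vsupp (mdim Pi) x" "vmul (mdim Pi) x g = vmul (mdim V) w k" by (simp only: in_image_set) blast
    have "vmul (mdim V) (vmul (mdim Pi) x q) k = vmul (mdim V) w k"
      using x(2) q(2) by (simp add: vmul_mmul)
    then have "vmul (mdim Pi) x q = w"
      using inj_vec[OF kinj vsupp_vmul[OF hom_wf[OF q(1)]] w] by blast
    then show "\<exists>v. vsupp (mdim Pi) v \<and> vmul (mdim Pi) v q = w" using x(1) by blast
  qed
  have qe: "is_epi A Pi V q" using q(1) qsurj by (simp add: is_epi_def)
  have top: "top_in A Sf I0 V"
    unfolding top_in_def
  proof (intro allI impI)
    fix M F assume MF: "simple_mod A M \<and> is_epi A V M F"
    have "is_epi A Pi M (mmul (mdim V) q F)" using epi_comp[OF qe] MF by blast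
    then have "isomorphic A M (Sf i)" using simple_quot_iso[OF pc Ss] MF by blast
    then show "\<exists>l\<in>I0. isomorphic A M (Sf l)" using i by blast
  qed
  obtain g0 where g0: "is_hom A V U g0" "mmul (mdim U) g0 \<iota> = k"
  proof -
    have "\<forall>V' \<kappa>. is_module A V' \<and> is_mono A V' K \<kappa> \<and> top_in A Sf I0 V'
        \<longrightarrow> (\<exists>g. is_hom A V' U g \<and> mmul (mdim U) g \<iota> = \<kappa>)"
      using ls unfolding largest_sub_def by (elim conjE)
    then have "is_module A V \<and> is_mono A V K k \<and> top_in A Sf I0 V
        \<longrightarrow> (\<exists>g. is_hom A V U g \<and> mmul (mdim U) g \<iota> = k)" by blast
    then show ?thesis using V(1,2) top that by blast
  qed
  have "is_hom A Pi U (mmul (mdim V) q g0)" by (rule hom_comp[OF q(1) g0(1)])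
  moreover have "mmul (mdim U) (mmul (mdim V) q g0) \<iota> = g"
    by (simp add: mmul_assoc g0(2) q(2))
  ultimately show ?thesis by blast
qed

lemma msum_eq: "(\<Sum>l<n. mscale (c l) (xs!l)) = (\<lambda>i j. \<Sum>l<n. c l * (xs!l) i j)"
  by (rule ext, rule ext) (simp add: sum_fun_apply mscale_def)

lemma zero_zmat: "(0 :: nat \<Rightarrow> nat \<Rightarrow> 'k::zero) = zmat"
  by (simp add: zmat_def zero_fun_def)

lemma wf_mat_0c: "wf_mat r 0 F \<Longrightarrow> F = zmat"
  by (auto simp: wf_mat_def zmat_def)

lemma dimK_general:
  fixes A :: "'k::field alg"
  assumes C: "\<And>n. C n = (if n = n0 then Pi else zmod)" and dC: "\<And>n. dC n = zmat"
    and E0: "E (n0 - 1) = zmod"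
    and Z: "Z = {g. is_hom A Pi (E n0) g \<and> mmul (mdim (E n0)) g (dE n0) = zmat}"
    and sub: "mm.subspace Z" and fin: "finite T" and ZT: "Z \<subseteq> mm.span T"
  shows "dim_HomK A C dC E dE = mm.dim Z"
proof -
  have mz: "mdim (zmod :: 'k amod) = 0" by (simp add: zmod_def)
  have chainD: "f n0 \<in> Z \<and> (\<forall>n. n \<noteq> n0 \<longrightarrow> f n = zmat)" if ch: "chain_map A C dC E dE f" for f
  proof
    have hom: "is_hom A (C n) (E n) (f n)" for n using ch by (simp add: chain_map_def)
    have eq: "mmul (mdim (C (n + 1))) (dC n) (f (n + 1)) = mmul (mdim (E n)) (f n) (dE n)" for n
      using ch by (simp add: chain_map_def)
    show "\<forall>n. n \<noteq> n0 \<longrightarrow> f n = zmat"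
    proof (intro allI impI)
      fix n assume "n \<noteq> n0"
      then have "is_hom A zmod (E n) (f n)" using hom[of n] C[of n] by simp
      then have "wf_mat 0 (mdim (E n)) (f n)" using hom_wf mz by fastforce
      then show "f n = zmat" by (rule wf_mat_0)
    qed
    have "mmul (mdim (E n0)) (f n0) (dE n0) = zmat" using eq[of n0] dC by simp
    moreover have "is_hom A Pi (E n0) (f n0)" using hom[of n0] C by simp
    ultimately show "f n0 \<in> Z" using Z by simp
  qed
  have chainI: "chain_map A C dC E dE (\<lambda>n. if n = n0 then G else zmat)" if G: "G \<in> Z" for G
    unfolding chain_map_def
  proof (intro conjI allI)
    fix n
    show "is_hom A (C n) (E n) (if n = n0 then G else zmat)"
      using G Z C by (auto simp: hom_zero)
    show "mmul (mdim (C (n + 1))) (dC n) (if n + 1 = n0 then G else zmat) = mmul (mdim (E n)) (if n = n0 then G else zmat) (dE n)"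
      using G Z dC by auto
  qed
  have nullD: "f n0 = zmat" if nh: "null_homotopic A C dC E dE f" for f
  proof -
    obtain h where h: "\<forall>n. is_hom A (C n) (E (n - 1)) (h n)"
      "\<forall>n. f n = madd (mmul (mdim (C (n + 1))) (dC n) (h (n + 1))) (mmul (mdim (E (n - 1))) (h n) (dE (n - 1)))"
      using nh by (auto simp: null_homotopic_def)
    have "f n0 = madd zmat zmat" using h(2) dC E0 mz by simp
    then show ?thesis by (simp add: madd_def zmat_def)
  qed
  have nullI: "null_homotopic A C dC E dE (\<lambda>n. zmat)"
    unfolding null_homotopic_def
    by (rule exI[of _ "\<lambda>n. zmat"]) (simp add: hom_zero madd_def, simp add: zmat_def)
  let ?L1 = "{length fs | fs. (\<forall>f\<in>set fs. chain_map A C dC E dE f) \<and>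
     (\<forall>c :: nat \<Rightarrow> 'k. null_homotopic A C dC E dE (\<lambda>n i j. \<Sum>l<length fs. c l * (fs ! l) n i j)
        \<longrightarrow> (\<forall>l<length fs. c l = 0))}"
  let ?L2 = "{length xs | xs. set xs \<subseteq> Z \<and>
     (\<forall>c. (\<Sum>l<length xs. mscale (c l) (xs!l)) = 0 \<longrightarrow> (\<forall>l<length xs. c l = 0))}"
  have "?L1 \<subseteq> ?L2"
  proof
    fix x assume "x \<in> ?L1"
    then obtain fs where fs: "x = length fs" "\<forall>f\<in>set fs. chain_map A C dC E dE f"
      "\<forall>c :: nat \<Rightarrow> 'k. null_homotopic A C dC E dE (\<lambda>n i j. \<Sum>l<length fs. c l * (fs ! l) n i j)
        \<longrightarrow> (\<forall>l<length fs. c l = 0)" by blast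
    define xs where "xs = map (\<lambda>f. f n0) fs"
    have cd: "(fs!l) n0 \<in> Z" "\<forall>n. n \<noteq> n0 \<longrightarrow> (fs!l) n = zmat" if "l < length fs" for l
      using chainD fs(2) that nth_mem by blast+
    have A: "set xs \<subseteq> Z" using cd by (auto simp: xs_def in_set_conv_nth)
    have B: "\<forall>c. (\<Sum>l<length xs. mscale (c l) (xs!l)) = 0 \<longrightarrow> (\<forall>l<length xs. c l = 0)"
    proof (rule allI, rule impI)
      fix c assume "(\<Sum>l<length xs. mscale (c l) (xs!l)) = 0"
      then have "(\<lambda>i j. \<Sum>l<length xs. c l * (xs!l) i j) = zmat"
        by (simp only: msum_eq zero_zmat)
      then have c0: "(\<lambda>i j. \<Sum>l<length fs. c l * (fs!l) n0 i j) = zmat"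
        by (simp add: xs_def)
      have "(\<lambda>n i j. \<Sum>l<length fs. c l * (fs ! l) n i j) = (\<lambda>n. zmat)"
      proof (rule ext)
        fix n show "(\<lambda>i j. \<Sum>l<length fs. c l * (fs ! l) n i j) = zmat"
        proof (cases "n = n0")
          case True then show ?thesis using c0 by simp
        next
          case False then show ?thesis using cd(2) by (simp add: zmat_def)
        qed
      qed
      then show "\<forall>l<length xs. c l = 0" using fs(3) nullI by (simp add: xs_def)
    qed
    have lx: "x = length xs" using fs(1) xs_def by simp
    show "x \<in> ?L2" by (rule CollectI, rule exI[of _ xs], intro conjI lx A B)
  qed
  moreover have "?L2 \<subseteq> ?L1"
  proof
    fix x assume "x \<in> ?L2"
    then obtain xs where xs: "x = length xs" "set xs \<subseteq> Z"
      "\<forall>c. (\<Sum>l<length xs. mscale (c l) (xs!l)) = 0 \<longrightarrow> (\<forall>l<length xs. c l = 0)" by blast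
    define fs where "fs = map (\<lambda>G n. if n = n0 then G else zmat) xs"
    have A: "\<forall>f\<in>set fs. chain_map A C dC E dE f" using chainI xs(2) by (auto simp: fs_def)
    have B: "\<forall>c :: nat \<Rightarrow> 'k. null_homotopic A C dC E dE (\<lambda>n i j. \<Sum>l<length fs. c l * (fs ! l) n i j)
        \<longrightarrow> (\<forall>l<length fs. c l = 0)"
    proof (rule allI, rule impI)
      fix c :: "nat \<Rightarrow> 'k"
      assume "null_homotopic A C dC E dE (\<lambda>n i j. \<Sum>l<length fs. c l * (fs ! l) n i j)"
      then have "(\<lambda>i j. \<Sum>l<length fs. c l * (fs ! l) n0 i j) = zmat" by (rule nullD)
      then have "(\<lambda>i j. \<Sum>l<length xs. c l * (xs!l) i j) = zmat" by (simp add: fs_def)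
      then have "(\<Sum>l<length xs. mscale (c l) (xs!l)) = 0" by (simp only: msum_eq zero_zmat)
      then show "\<forall>l<length fs. c l = 0" using xs(3) by (simp add: fs_def)
    qed
    have lx: "x = length fs" using xs(1) fs_def by simp
    show "x \<in> ?L1" by (rule CollectI, rule exI[of _ fs], intro conjI lx A B)
  qed
  ultimately have "?L1 = ?L2" by blast
  then have "dim_HomK A C dC E dE = Max ?L2" by (simp add: dim_HomK_def)
  also have "\<dots> = mm.dim Z" by (rule mm.dimL_eq[OF sub fin ZT])
  finally show ?thesis .
qed

lemma zs_subspace:
  fixes A :: "'k::field alg"
  shows "mm.subspace {g. is_hom A Pi M g \<and> mmul (mdim M) g D = zmat}"
  unfolding mm.subspace_def
proof (intro conjI ballI allI)
  show "0 \<in> {g. is_hom A Pi M g \<and> mmul (mdim M) g D = zmat}"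
    by (simp add: zero_zmat hom_zero)
next
  fix x y assume "x \<in> {g. is_hom A Pi M g \<and> mmul (mdim M) g D = zmat}" "y \<in> {g. is_hom A Pi M g \<and> mmul (mdim M) g D = zmat}"
  then show "x + y \<in> {g. is_hom A Pi M g \<and> mmul (mdim M) g D = zmat}"
    by (auto simp: plus_fun_def hom_add mmul_add_left zmat_def)
next
  fix c x assume "x \<in> {g. is_hom A Pi M g \<and> mmul (mdim M) g D = zmat}"
  then show "mscale c x \<in> {g. is_hom A Pi M g \<and> mmul (mdim M) g D = zmat}"
    by (auto simp: mscale_def hom_scale mmul_scale_left zmat_def)
qed

lemma zs_span:
  "{g. is_hom A Pi M g \<and> P g} \<subseteq> mm.span (Emat ` ({..<mdim Pi} \<times> {..<mdim M}))"
  using wf_in_span hom_wf by blast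

lemma dim_Hom_eq:
  fixes A :: "'k::field alg"
  shows "dim_Hom A M N = mm.dim {F. is_hom A M N F}"
proof -
  have "dim_Hom A M N = Max {length xs | xs. set xs \<subseteq> {F. is_hom A M N F} \<and>
     (\<forall>c. (\<Sum>l<length xs. mscale (c l) (xs!l)) = 0 \<longrightarrow> (\<forall>l<length xs. c l = 0))}"
    unfolding dim_Hom_def by (simp only: msum_eq zero_zmat subset_iff mem_Collect_eq Ball_def)
  also have "\<dots> = mm.dim {F. is_hom A M N F}"
  proof (rule mm.dimL_eq[OF hom_subspace])
    show "finite (Emat ` ({..<mdim M} \<times> {..<mdim N}))" by simp
    show "{F. is_hom A M N F} \<subseteq> mm.span (Emat ` ({..<mdim M} \<times> {..<mdim N}))"
      using wf_in_span hom_wf by blast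
  qed
  finally show ?thesis .
qed


theorem mainTheorem2:
  fixes A :: "'k::field alg"
    and I I0 :: "'i set"
    and S P :: "'i \<Rightarrow> 'k amod"
    and i j :: 'i
    and R :: "nat \<Rightarrow> 'k amod" and dR :: "nat \<Rightarrow> 'k mat"
    and K :: "nat \<Rightarrow> 'k amod" and \<kappa> :: "nat \<Rightarrow> 'k mat"
    and U :: "nat \<Rightarrow> 'k amod" and \<iota> :: "nat \<Rightarrow> 'k mat" and \<pi> :: "nat \<Rightarrow> 'k mat"
    and t :: nat
  assumes "symmetric_algebra A"
    and "simple_reps A I S"
    and "\<forall>l\<in>I. \<exists>e. proj_cover A (P l) (S l) e"
    and "I0 \<subseteq> I"
    and "i \<in> I0"
    and "j \<in> I - I0"
    and "R_tower A S I0 (P j) R dR K \<kappa> U \<iota> \<pi>"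
  shows "dim_HomK A (T_mods_I0 P i t) (T_diff_I0 t) (T_mods_j (P j) R t) (T_diff_j dR t)
       + dim_HomK A (T_mods_I0 P i (t + 1)) (T_diff_I0 (t + 1)) (T_mods_j (P j) R (t + 1)) (T_diff_j dR (t + 1))
       = dim_Hom A (P i) (R t)"
proof -
  have iI: "i \<in> I" and jI: "j \<in> I" using assms(4,5,6) by auto
  have Si: "simple_mod A (S i)" using assms(2) iI by (simp add: simple_reps_def)
  obtain ei where pci: "proj_cover A (P i) (S i) ei" using assms(3) iI by blast
  obtain ej where pcj: "proj_cover A (P j) (S j) ej" using assms(3) jI by blast
  have Pim: "is_module A (P i)" using pci by (simp add: proj_cover_def projective_mod_def)
  have Pjm: "is_module A (P j)" using pcj by (simp add: proj_cover_def projective_mod_def)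
  have Piproj: "projective_mod A (P i)" using pci by (simp add: proj_cover_def)
  define prev where "prev = (\<lambda>m. if m = 0 then P j else R (m - 1))"
  have tw: "(if m = 0 then K 0 = P j \<and> \<kappa> 0 = idm (mdim (P j))
           else is_kernel A (R (m - 1)) (prev (m - 1)) (dR (m - 1)) (K m) (\<kappa> m)) \<and>
          largest_sub A S I0 (K m) (U m) (\<iota> m) \<and>
          proj_cover A (R m) (U m) (\<pi> m) \<and>
          dR m = mmul (mdim (U m)) (\<pi> m) (mmul (mdim (K m)) (\<iota> m) (\<kappa> m))" for m
    using assms(7) unfolding R_tower_def Let_def prev_def by blast
  have ls: "largest_sub A S I0 (K m) (U m) (\<iota> m)" for m using tw[of m] by blast
  have pcR: "proj_cover A (R m) (U m) (\<pi> m)" for m using tw[of m] by blast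
  have dRdef: "dR m = mmul (mdim (U m)) (\<pi> m) (mmul (mdim (K m)) (\<iota> m) (\<kappa> m))" for m using tw[of m] by blast
  have Rm: "is_module A (R m)" for m using pcR[of m] by (simp add: proj_cover_def projective_mod_def)
  have Um: "is_module A (U m)" for m using pcR[of m] by (simp add: proj_cover_def)
  have pie: "is_epi A (R m) (U m) (\<pi> m)" for m using pcR[of m] by (simp add: proj_cover_def)
  have iota_h: "is_hom A (U m) (K m) (\<iota> m)" for m using ls[of m] by (simp add: largest_sub_def is_mono_def)
  have ker: "is_kernel A (R (m - 1)) (prev (m - 1)) (dR (m - 1)) (K m) (\<kappa> m)" if "0 < m" for m
    using tw[of m] that by simp
  have K0: "K 0 = P j" "\<kappa> 0 = idm (mdim (P j))" using tw[of 0] by auto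
  have Km: "is_module A (K m)" for m
    using ker[of m] K0 Pjm by (cases "m = 0") (auto simp: is_kernel_def)
  have prevm: "is_module A (prev m)" for m using Rm Pjm by (simp add: prev_def)
  have kappa_h: "is_hom A (K m) (prev m) (\<kappa> m)" for m
  proof (cases "m = 0")
    case True then show ?thesis using K0 hom_idm[OF Pjm] by (simp add: prev_def)
  next
    case False then show ?thesis using ker[of m] by (simp add: is_kernel_def is_mono_def prev_def)
  qed
  have dR_h: "is_hom A (R m) (prev m) (dR m)" for m
    unfolding dRdef using pie[of m] iota_h kappa_h
    by (auto simp: is_epi_def intro!: hom_comp)
  define D where "D = (\<lambda>m. if m = 0 then zmat else dR (m - 1))"
  define Zs where "Zs = (\<lambda>m. {g. is_hom A (P i) (prev m) g \<and> mmul (mdim (prev m)) g (D m) = zmat})"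
  have dimK: "dim_HomK A (T_mods_I0 P i m) (T_diff_I0 m) (T_mods_j (P j) R m) (T_diff_j dR m) = mm.dim (Zs m)" for m
  proof (rule dimK_general)
    show "T_mods_I0 P i m n = (if n = - int m then P i else zmod)" for n by (simp add: T_mods_I0_def)
    show "T_diff_I0 m n = zmat" for n by (simp add: T_diff_I0_def)
    show "T_mods_j (P j) R m (- int m - 1) = zmod" by (simp add: T_mods_j_def)
    have e1: "T_mods_j (P j) R m (- int m) = prev m"
      by (cases "m = 0") (simp_all add: T_mods_j_def prev_def nat_diff_distrib')
    have e2: "T_diff_j dR m (- int m) = D m"
      by (cases "m = 0") (simp_all add: T_diff_j_def D_def nat_diff_distrib')
    show "Zs m = {g. is_hom A (P i) (T_mods_j (P j) R m (- int m)) g \<and>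
        mmul (mdim (T_mods_j (P j) R m (- int m))) g (T_diff_j dR m (- int m)) = zmat}"
      by (simp only: e1 e2 Zs_def)
    show "mm.subspace (Zs m)" unfolding Zs_def by (rule zs_subspace)
    show "finite (Emat ` ({..<mdim (P i)} \<times> {..<mdim (prev m)}))" by simp
    show "Zs m \<subseteq> mm.span (Emat ` ({..<mdim (P i)} \<times> {..<mdim (prev m)}))"
      unfolding Zs_def by (rule zs_span)
  qed
  define X where "X = {F. is_hom A (P i) (R t) F}"
  define \<Phi> where "\<Phi> = (\<lambda>F. mmul (mdim (R t)) F (dR t))"
  have rank: "mm.dim X = mm.dim {x\<in>X. \<Phi> x = 0} + mm.dim (\<Phi> ` X)"
  proof (rule mm.rank_nullity)
    show "mm.subspace X" unfolding X_def by (rule hom_subspace)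
    show "finite (Emat ` ({..<mdim (P i)} \<times> {..<mdim (R t)}))" by simp
    show "X \<subseteq> mm.span (Emat ` ({..<mdim (P i)} \<times> {..<mdim (R t)}))"
      unfolding X_def using wf_in_span hom_wf by blast
    show "finite (Emat ` ({..<mdim (P i)} \<times> {..<mdim (prev t)}))" by simp
    show "\<Phi> ` X \<subseteq> mm.span (Emat ` ({..<mdim (P i)} \<times> {..<mdim (prev t)}))"
      unfolding X_def \<Phi>_def using wf_in_span hom_wf hom_comp[OF _ dR_h] by blast
    show "\<Phi> (x + y) = \<Phi> x + \<Phi> y" for x y
      by (simp add: \<Phi>_def plus_fun_def mmul_add_left)
    show "\<Phi> (mscale c x) = mscale c (\<Phi> x)" for c x
      by (simp add: \<Phi>_def mscale_def mmul_scale_left)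
  qed
  have kerZ: "{x\<in>X. \<Phi> x = 0} = Zs (t + 1)"
    by (simp add: X_def \<Phi>_def Zs_def prev_def D_def zero_zmat)
  have dd: "mmul (mdim (R (t - 1))) (dR t) (dR (t - 1)) = zmat" if "0 < t"
  proof -
    have kz: "mmul (mdim (R (t - 1))) (\<kappa> t) (dR (t - 1)) = zmat" using ker[OF that] by (simp add: is_kernel_def)
    have "mmul (mdim (R (t - 1))) (dR t) (dR (t - 1)) =
       mmul (mdim (U t)) (\<pi> t) (mmul (mdim (K t)) (\<iota> t) (mmul (mdim (R (t - 1))) (\<kappa> t) (dR (t - 1))))"
      by (simp add: dRdef mmul_assoc)
    then show ?thesis using kz by simp
  qed
  have imZ: "\<Phi> ` X = Zs t"
  proof
    show "\<Phi> ` X \<subseteq> Zs t"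
    proof
      fix y assume "y \<in> \<Phi> ` X"
      then obtain F where F: "is_hom A (P i) (R t) F" "y = \<Phi> F" by (auto simp: X_def)
      have h: "is_hom A (P i) (prev t) y" using hom_comp[OF F(1) dR_h] F(2) by (simp add: \<Phi>_def)
      have "mmul (mdim (prev t)) y (D t) = zmat"
      proof (cases "t = 0")
        case True then show ?thesis by (simp add: D_def)
      next
        case False
        have "mmul (mdim (prev t)) y (D t) = mmul (mdim (R t)) F (mmul (mdim (R (t - 1))) (dR t) (dR (t - 1)))"
          using False by (simp add: F(2) \<Phi>_def D_def prev_def mmul_assoc)
        then show ?thesis using dd False by simp
      qed
      then show "y \<in> Zs t" using h by (simp add: Zs_def)
    qed
  next
    show "Zs t \<subseteq> \<Phi> ` X"
    proof
      fix g assume "g \<in> Zs t"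
      then have g: "is_hom A (P i) (prev t) g" "mmul (mdim (prev t)) g (D t) = zmat" by (auto simp: Zs_def)
      have "\<exists>g'. is_hom A (P i) (K t) g' \<and> mmul (mdim (K t)) g' (\<kappa> t) = g"
      proof (cases "t = 0")
        case True
        then show ?thesis using g(1) K0 mmul_idm_right[OF hom_wf[OF g(1)]] by (auto simp: prev_def)
      next
        case False
        then have t0: "0 < t" by simp
        have kk: "is_kernel A (R (t - 1)) (prev (t - 1)) (dR (t - 1)) (K t) (\<kappa> t)" by (rule ker[OF t0])
        have gR: "is_hom A (P i) (R (t - 1)) g" using g(1) False by (simp add: prev_def)
        have gd: "mmul (mdim (R (t - 1))) g (dR (t - 1)) = zmat" using g(2) False by (simp add: prev_def D_def)
        have rows: "\<forall>a<mdim (P i). \<exists>u. vsupp (mdim (K t)) u \<and> vmul (mdim (K t)) u (\<kappa> t) = g a"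
        proof (intro allI impI)
          fix a assume a: "a < mdim (P i)"
          have "vsupp (mdim (R (t - 1))) (g a)" using hom_wf[OF gR] by (auto simp: wf_mat_def vsupp_def)
          moreover have "vmul (mdim (R (t - 1))) (g a) (dR (t - 1)) = (\<lambda>_. 0)"
            using gd mmul_row[of "mdim (R (t - 1))" g "dR (t - 1)" a] by (simp add: zmat_def)
          ultimately show "\<exists>u. vsupp (mdim (K t)) u \<and> vmul (mdim (K t)) u (\<kappa> t) = g a"
            using kk unfolding is_kernel_def by blast
        qed
        have km: "is_mono A (K t) (R (t - 1)) (\<kappa> t)" using kk by (simp add: is_kernel_def)
        show ?thesis by (rule factor_mono[OF Pim Km gR km rows])
      qed
      then obtain g' where g': "is_hom A (P i) (K t) g'" "mmul (mdim (K t)) g' (\<kappa> t) = g" by blast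
      obtain g'' where g'': "is_hom A (P i) (U t) g''" "mmul (mdim (U t)) g'' (\<iota> t) = g'"
        using factor_through_top[OF pci Si assms(5) Km g'(1) ls] by blast
      obtain h where h: "is_hom A (P i) (R t) h" "mmul (mdim (R t)) h (\<pi> t) = g''"
        using Piproj Rm[of t] Um[of t] pie[of t] g''(1) unfolding projective_mod_def by blast
      have "\<Phi> h = mmul (mdim (K t)) (mmul (mdim (U t)) (mmul (mdim (R t)) h (\<pi> t)) (\<iota> t)) (\<kappa> t)"
        by (simp add: \<Phi>_def dRdef mmul_assoc)
      also have "\<dots> = g" using h(2) g''(2) g'(2) by simp
      finally show "g \<in> \<Phi> ` X" using h(1) by (auto simp: X_def)
    qed
  qed
  have "dim_Hom A (P i) (R t) = mm.dim X" by (simp add: dim_Hom_eq X_def)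
  also have "\<dots> = mm.dim (Zs (t + 1)) + mm.dim (Zs t)" using rank kerZ imZ by simp
  finally show ?thesis using dimK[of t] dimK[of "t + 1"] by simp
qed

end
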